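(* Let $M$ be a proper metric space and $\mathcal{X},\mathcal{Z},\mathcal{W}$ big families in $M$ with $\mathcal{X}\Cap\mathcal{W}\subseteq\mathcal{X}\Cap\mathcal{Z}$. Then the map $HX_n(\mathcal{X},\mathcal{X}\Cap\mathcal{Z})\to HX_n(\mathcal{X}\Cup\mathcal{W},(\mathcal{X}\Cap\mathcal{Z})\Cup\mathcal{W})$ induced by the inclusion $CX_\bullet(\mathcal{X})\subseteq CX_\bullet(\mathcal{X}\Cup\mathcal{W})$ is an isomorphism for every $n$.
   Context: A big family is a collection of subsets of $M$ closed under subsets, finite unions and $R$-thickenings ($Y_R=\{x:d(x,Y)\le R\}$). $\mathcal{X}\Cap\mathcal{Y}=\{X\cap Y\}$, $\mathcal{X}\Cup\mathcal{Y}=\{X\cup Y\}$ elementwise. With $M^{n+1}$ carrying the max metric and $\Delta_R$ the $R$-thickening of the multi-diagonal, a coarse $n$-chain is a complex-valued locally finite regular Borel measure on $M^{n+1}$ supported in some $\Delta_R$; it is supported on $Y$ if it vanishes outside $Y^{n+1}$, and $CX_n(\mathcal{Y})$ consists of coarse chains supported on some member of $\mathcal{Y}$. Differential $\partial\mu=\sum_{i}(-1)^i(\pi_i)_*\mu$, $\pi_i$ omitting coordinate $i$. $HX_n(\mathcal{X},\mathcal{X}\Cap\mathcal{Y})$ is the homology of $CX_\bullet(\mathcal{X})/CX_\bullet(\mathcal{X}\Cap\mathcal{Y})$. *)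

theory Defs
  imports "HOL-Analysis.Analysis"
begin

definition proper_metric_space :: "'a::metric_space itself \<Rightarrow> bool" where
  "proper_metric_space _ \<longleftrightarrow> (\<forall>(x::'a) r. compact (cball x r))"

text \<open>R-thickening Y_R = {x. d(x,Y) \<le> R} (d(x,{}) = +infinity, so the thickening of {} is {}).\<close>
definition thick :: "real \<Rightarrow> 'a::metric_space set \<Rightarrow> 'a set" where
  "thick R Y = {x. Y \<noteq> {} \<and> infdist x Y \<le> R}"

definition big_family :: "'a::metric_space set set \<Rightarrow> bool" where
  "big_family \<Y> \<longleftrightarrow>
     {} \<in> \<Y> \<and>
     (\<forall>Y\<in>\<Y>. \<forall>Y'. Y' \<subseteq> Y \<longrightarrow> Y' \<in> \<Y>) \<and>
     (\<forall>Y\<in>\<Y>. \<forall>Y'\<in>\<Y>. Y \<union> Y' \<in> \<Y>) \<and>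
     (\<forall>Y\<in>\<Y>. \<forall>R. thick R Y \<in> \<Y>)"

definition fam_cap :: "'a set set \<Rightarrow> 'a set set \<Rightarrow> 'a set set" where
  "fam_cap \<X> \<Y> = {X \<inter> Y | X Y. X \<in> \<X> \<and> Y \<in> \<Y>}"

definition fam_cup :: "'a set set \<Rightarrow> 'a set set \<Rightarrow> 'a set set" where
  "fam_cup \<X> \<Y> = {X \<union> Y | X Y. X \<in> \<X> \<and> Y \<in> \<Y>}"

text \<open>M^(n+1): extensional functions on {..n}; Borel sets of the product, and bounded ones
  (bounded for the max metric = relatively compact, M being proper).\<close>
definition cube :: "nat \<Rightarrow> 'a set \<Rightarrow> (nat \<Rightarrow> 'a) set" where
  "cube n Y = PiE {..n} (\<lambda>_. Y)"

definition bsets :: "nat \<Rightarrow> (nat \<Rightarrow> 'a::metric_space) set set" where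
  "bsets n = {A \<in> sets (PiM {..n} (\<lambda>_. borel)).
                \<exists>x0 r. \<forall>x\<in>A. \<forall>i\<le>n. dist (x i) x0 \<le> r}"

definition prod_top :: "nat \<Rightarrow> (nat \<Rightarrow> 'a::topological_space) topology" where
  "prod_top n = product_topology (\<lambda>_. euclidean) {..n}"

definition diag_thick :: "nat \<Rightarrow> real \<Rightarrow> (nat \<Rightarrow> 'a::metric_space) set" where
  "diag_thick n R = {x \<in> cube n UNIV. \<exists>y. \<forall>i\<le>n. dist (x i) y \<le> R}"

text \<open>Complex-valued locally finite regular Borel measure on M^(n+1): a complex set function on
  the bounded Borel sets (set to 0 elsewhere), countably additive, and regular.\<close>
definition locfin_measure :: "nat \<Rightarrow> ((nat \<Rightarrow> 'a::metric_space) set \<Rightarrow> complex) \<Rightarrow> bool" where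
  "locfin_measure n \<mu> \<longleftrightarrow>
     (\<forall>A. A \<notin> bsets n \<longrightarrow> \<mu> A = 0) \<and>
     (\<forall>F::nat \<Rightarrow> _. range F \<subseteq> bsets n \<longrightarrow> disjoint_family F \<longrightarrow> \<Union>(range F) \<in> bsets n \<longrightarrow>
         (\<lambda>i. \<mu> (F i)) sums \<mu> (\<Union>(range F))) \<and>
     (\<forall>A\<in>bsets n. \<forall>e>0. \<exists>K U. compactin (prod_top n) K \<and> openin (prod_top n) U \<and>
         K \<subseteq> A \<and> A \<subseteq> U \<and> (\<forall>B\<in>bsets n. B \<subseteq> U - K \<longrightarrow> cmod (\<mu> B) < e))"

definition supp_in_diag :: "nat \<Rightarrow> real \<Rightarrow> ((nat \<Rightarrow> 'a::metric_space) set \<Rightarrow> complex) \<Rightarrow> bool" where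
  "supp_in_diag n R \<mu> \<longleftrightarrow> (\<forall>A\<in>bsets n. A \<inter> diag_thick n R = {} \<longrightarrow> \<mu> A = 0)"

definition coarse_chain :: "nat \<Rightarrow> ((nat \<Rightarrow> 'a::metric_space) set \<Rightarrow> complex) \<Rightarrow> bool" where
  "coarse_chain n \<mu> \<longleftrightarrow> locfin_measure n \<mu> \<and> (\<exists>R. supp_in_diag n R \<mu>)"

definition supported_on :: "nat \<Rightarrow> 'a set \<Rightarrow> ((nat \<Rightarrow> 'a::metric_space) set \<Rightarrow> complex) \<Rightarrow> bool" where
  "supported_on n Y \<mu> \<longleftrightarrow> (\<forall>A\<in>bsets n. A \<inter> cube n Y = {} \<longrightarrow> \<mu> A = 0)"

definition CX :: "nat \<Rightarrow> 'a::metric_space set set \<Rightarrow> ((nat \<Rightarrow> 'a) set \<Rightarrow> complex) set" where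
  "CX n \<Y> = {\<mu>. coarse_chain n \<mu> \<and> (\<exists>Y\<in>\<Y>. supported_on n Y \<mu>)}"

definition omit :: "nat \<Rightarrow> nat \<Rightarrow> (nat \<Rightarrow> 'a) \<Rightarrow> (nat \<Rightarrow> 'a)" where
  "omit n i x = (\<lambda>j. if j \<le> n then (if j < i then x j else x (Suc j)) else undefined)"

text \<open>Push-forward of a coarse (n+1)-chain along pi_i; the preimage is cut down to the
  thickened diagonal carrying the chain (which makes it bounded; the value does not depend on
  the radius chosen).\<close>
definition pushfwd :: "nat \<Rightarrow> nat \<Rightarrow> ((nat \<Rightarrow> 'a::metric_space) set \<Rightarrow> complex) \<Rightarrow> ((nat \<Rightarrow> 'a) set \<Rightarrow> complex)" where
  "pushfwd n i \<mu> = (\<lambda>A. if A \<in> bsets n then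
       \<mu> (omit n i -` A \<inter> diag_thick (Suc n) (SOME R. supp_in_diag (Suc n) R \<mu>)) else 0)"

fun bd :: "nat \<Rightarrow> ((nat \<Rightarrow> 'a::metric_space) set \<Rightarrow> complex) \<Rightarrow> ((nat \<Rightarrow> 'a) set \<Rightarrow> complex)" where
  "bd 0 \<mu> = (\<lambda>A. 0)"
| "bd (Suc n) \<mu> = (\<lambda>A. \<Sum>i\<le>Suc n. (-1) ^ i * pushfwd n i \<mu> A)"

definition chain_add :: "('b \<Rightarrow> complex) \<Rightarrow> ('b \<Rightarrow> complex) \<Rightarrow> ('b \<Rightarrow> complex)" where
  "chain_add \<mu> \<nu> = (\<lambda>A. \<mu> A + \<nu> A)"

definition rel_cycles :: "nat \<Rightarrow> 'a::metric_space set set \<Rightarrow> 'a set set \<Rightarrow> ((nat \<Rightarrow> 'a) set \<Rightarrow> complex) set" where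
  "rel_cycles n \<X> \<A> = {c \<in> CX n \<X>. n = 0 \<or> bd n c \<in> CX (n - 1) \<A>}"

definition rel_bdries :: "nat \<Rightarrow> 'a::metric_space set set \<Rightarrow> 'a set set \<Rightarrow> ((nat \<Rightarrow> 'a) set \<Rightarrow> complex) set" where
  "rel_bdries n \<X> \<A> = {chain_add (bd (Suc n) b) a | b a. b \<in> CX (Suc n) \<X> \<and> a \<in> CX n \<A>}"

definition HX :: "nat \<Rightarrow> 'a::metric_space set set \<Rightarrow> 'a set set \<Rightarrow> ((nat \<Rightarrow> 'a) set \<Rightarrow> complex) set set" where
  "HX n \<X> \<A> = (\<lambda>c. {chain_add c b | b. b \<in> rel_bdries n \<X> \<A>}) ` rel_cycles n \<X> \<A>"

text \<open>Map induced by inclusion of chains: the class c + B goes to c + B'.\<close>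
definition HX_incl :: "nat \<Rightarrow> 'a::metric_space set set \<Rightarrow> 'a set set
     \<Rightarrow> ((nat \<Rightarrow> 'a) set \<Rightarrow> complex) set \<Rightarrow> ((nat \<Rightarrow> 'a) set \<Rightarrow> complex) set" where
  "HX_incl n \<X>' \<A>' C = {chain_add x b | x b. x \<in> C \<and> b \<in> rel_bdries n \<X>' \<A>'}"

end

theory Submission
  imports Defs "HOL-Library.Function_Algebras"
begin

abbreviation PM :: "nat \<Rightarrow> (nat \<Rightarrow> 'a::metric_space) measure" where
  "PM n \<equiv> PiM {..n} (\<lambda>_. borel)"

lemma space_PM: "space (PM n :: (nat \<Rightarrow> 'a::metric_space) measure) = cube n UNIV"
  by (simp add: space_PiM cube_def)

lemma bsets_sets: "A \<in> bsets n \<Longrightarrow> A \<in> sets (PM n)"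
  by (simp add: bsets_def)

lemma bsets_space: "A \<in> bsets n \<Longrightarrow> A \<subseteq> cube n UNIV"
  using sets.sets_into_space[OF bsets_sets] space_PM by metis

lemma bsets_subset: "A \<in> bsets n \<Longrightarrow> B \<in> sets (PM n) \<Longrightarrow> B \<subseteq> A \<Longrightarrow> B \<in> bsets n"
  unfolding bsets_def by blast

lemma bsets_Int: "A \<in> bsets n \<Longrightarrow> B \<in> sets (PM n) \<Longrightarrow> A \<inter> B \<in> bsets n"
  by (rule bsets_subset[of A]) (auto intro: bsets_sets)

lemma bsets_Diff: "A \<in> bsets n \<Longrightarrow> B \<in> sets (PM n) \<Longrightarrow> A - B \<in> bsets n"
  by (rule bsets_subset[of A]) (auto intro: bsets_sets)

lemma bsets_empty: "{} \<in> bsets n"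
  unfolding bsets_def by auto

lemma bsets_Un:
  assumes "A \<in> bsets n" "B \<in> bsets n" shows "A \<union> B \<in> bsets n"
proof -
  obtain x0 r where 1: "\<forall>x\<in>A. \<forall>i\<le>n. dist (x i) x0 \<le> r" using assms(1) unfolding bsets_def by blast
  obtain x1 s where 2: "\<forall>x\<in>B. \<forall>i\<le>n. dist (x i) x1 \<le> s" using assms(2) unfolding bsets_def by blast
  have "\<forall>x\<in>A \<union> B. \<forall>i\<le>n. dist (x i) x0 \<le> max r (s + dist x1 x0)"
  proof (intro ballI allI impI)
    fix x i assume xAB: "x \<in> A \<union> B" and "i \<le> n"
    show "dist (x i) x0 \<le> max r (s + dist x1 x0)"
      using xAB
    proof (elim UnE)
      assume "x \<in> A" then show ?thesis using 1 \<open>i \<le> n\<close> by force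
    next
      assume "x \<in> B" then have "dist (x i) x1 \<le> s" using 2 \<open>i \<le> n\<close> by blast
      then show ?thesis using dist_triangle[of "x i" x0 x1] by linarith
    qed
  qed
  then show ?thesis using assms unfolding bsets_def by blast
qed

lemma lf_empty: assumes "locfin_measure n \<mu>" shows "\<mu> {} = 0"
proof -
  have h: "\<forall>F::nat\<Rightarrow>_. range F \<subseteq> bsets n \<longrightarrow> disjoint_family F \<longrightarrow> \<Union>(range F) \<in> bsets n \<longrightarrow> (\<lambda>i. \<mu> (F i)) sums \<mu> (\<Union>(range F))"
    using assms unfolding locfin_measure_def by blast
  have "(\<lambda>i::nat. \<mu> {}) sums \<mu> {}" using spec[OF h, of "\<lambda>_. {}"] by (simp add: bsets_empty disjoint_family_on_def)
  then have "(\<lambda>i::nat. \<mu> {}) \<longlonglongrightarrow> 0" using summable_LIMSEQ_zero sums_summable by blast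
  then show ?thesis using LIMSEQ_const_iff by blast
qed

lemma lf_add2:
  assumes "locfin_measure n \<mu>" "A \<in> bsets n" "B \<in> bsets n" "A \<inter> B = {}"
  shows "\<mu> (A \<union> B) = \<mu> A + \<mu> B"
proof -
  define F where "F = (\<lambda>k::nat. if k = 0 then A else if k = 1 then B else {})"
  have r: "range F \<subseteq> bsets n" using assms bsets_empty unfolding F_def by auto
  have d: "disjoint_family F" using assms unfolding F_def disjoint_family_on_def by auto
  have u: "\<Union>(range F) = A \<union> B" unfolding F_def by (auto split: if_splits)
  have "(\<lambda>i. \<mu> (F i)) sums \<mu> (A \<union> B)"
    using assms(1) r d u bsets_Un[OF assms(2,3)] unfolding locfin_measure_def by metis
  moreover have "(\<lambda>i. \<mu> (F i)) sums (\<Sum>i\<in>{0,1}. \<mu> (F i))"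
    by (rule sums_finite) (auto simp: F_def lf_empty[OF assms(1)])
  ultimately have "\<mu> (A \<union> B) = (\<Sum>i\<in>{0,1}. \<mu> (F i))" using sums_unique2 by blast
  then show ?thesis by (simp add: F_def)
qed

lemma lf_split:
  assumes "locfin_measure n \<mu>" "A \<in> bsets n" "S \<in> sets (PM n)"
  shows "\<mu> A = \<mu> (A \<inter> S) + \<mu> (A - S)"
proof -
  have "A = (A \<inter> S) \<union> (A - S)" by blast
  then show ?thesis using lf_add2[OF assms(1) bsets_Int[OF assms(2,3)] bsets_Diff[OF assms(2,3)]] by auto
qed

lemma chain_add_eq: "chain_add \<mu> \<nu> = \<mu> + \<nu>"
  by (simp add: chain_add_def fun_eq_iff)

lemma lf_partsC:
  assumes "locfin_measure n \<mu>"
  shows "(\<forall>A. A \<notin> bsets n \<longrightarrow> \<mu> A = 0) \<and>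
     (\<forall>F::nat \<Rightarrow> _. range F \<subseteq> bsets n \<longrightarrow> disjoint_family F \<longrightarrow> \<Union>(range F) \<in> bsets n \<longrightarrow>
         (\<lambda>i. \<mu> (F i)) sums \<mu> (\<Union>(range F))) \<and>
     (\<forall>A\<in>bsets n. \<forall>e>0. \<exists>K U. compactin (prod_top n) K \<and> openin (prod_top n) U \<and>
         K \<subseteq> A \<and> A \<subseteq> U \<and> (\<forall>B\<in>bsets n. B \<subseteq> U - K \<longrightarrow> cmod (\<mu> B) < e))"
  using assms by (simp only: locfin_measure_def)

lemmas lf_parts = lf_partsC[THEN conjunct1] lf_partsC[THEN conjunct2, THEN conjunct1]
   lf_partsC[THEN conjunct2, THEN conjunct2]

lemma lf_reg:
  assumes "locfin_measure n \<mu>" "A \<in> bsets n" "e > 0"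
  obtains K U where "compactin (prod_top n) K" "openin (prod_top n) U" "K \<subseteq> A" "A \<subseteq> U"
      "\<And>B. B \<in> bsets n \<Longrightarrow> B \<subseteq> U - K \<Longrightarrow> cmod (\<mu> B) < e"
proof -
  have "\<exists>K U. compactin (prod_top n) K \<and> openin (prod_top n) U \<and>
         K \<subseteq> A \<and> A \<subseteq> U \<and> (\<forall>B\<in>bsets n. B \<subseteq> U - K \<longrightarrow> cmod (\<mu> B) < e)"
    using lf_parts(3)[OF assms(1)] assms(2,3) by blast
  then obtain K U where "compactin (prod_top n) K \<and> openin (prod_top n) U \<and>
         K \<subseteq> A \<and> A \<subseteq> U \<and> (\<forall>B\<in>bsets n. B \<subseteq> U - K \<longrightarrow> cmod (\<mu> B) < e)" by (elim exE)
  then show ?thesis using that by (elim conjE) simp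
qed

lemma lf_zero_out: "locfin_measure n \<mu> \<Longrightarrow> A \<notin> bsets n \<Longrightarrow> \<mu> A = 0"
  using lf_parts(1)[of n \<mu>] by blast

lemma lf_sums: "locfin_measure n \<mu> \<Longrightarrow> range F \<subseteq> bsets n \<Longrightarrow> disjoint_family F \<Longrightarrow> \<Union>(range F) \<in> bsets n
   \<Longrightarrow> (\<lambda>i. \<mu> (F i)) sums \<mu> (\<Union>(range F))"
  using lf_parts(2)[of n \<mu>] by blast

lemma lf_intro:
  assumes "\<And>A. A \<notin> bsets n \<Longrightarrow> \<mu> A = 0"
    and "\<And>F::nat \<Rightarrow> _. range F \<subseteq> bsets n \<Longrightarrow> disjoint_family F \<Longrightarrow> \<Union>(range F) \<in> bsets n
          \<Longrightarrow> (\<lambda>i. \<mu> (F i)) sums \<mu> (\<Union>(range F))"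
    and "\<And>A e. A \<in> bsets n \<Longrightarrow> e > 0 \<Longrightarrow> \<exists>K U. compactin (prod_top n) K \<and> openin (prod_top n) U \<and>
         K \<subseteq> A \<and> A \<subseteq> U \<and> (\<forall>B\<in>bsets n. B \<subseteq> U - K \<longrightarrow> cmod (\<mu> B) < e)"
  shows "locfin_measure n \<mu>"
  unfolding locfin_measure_def using assms by simp

lemma lf_zero: "locfin_measure n (\<lambda>A. 0)"
proof (rule lf_intro)
  fix A :: "(nat \<Rightarrow> 'a) set" and e :: real assume A: "A \<in> bsets n" and e: "e > 0"
  have At: "A \<subseteq> topspace (prod_top n)" using bsets_space[OF A] by (simp add: prod_top_def cube_def)
  show "\<exists>K U. compactin (prod_top n) K \<and> openin (prod_top n) U \<and> K \<subseteq> A \<and> A \<subseteq> U \<and>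
          (\<forall>B\<in>bsets n. B \<subseteq> U - K \<longrightarrow> cmod ((\<lambda>A. 0::complex) B) < e)"
  proof (rule exI[of _ "{}"], rule exI[of _ "topspace (prod_top n)"], intro conjI ballI impI)
  qed (use At e in auto)
qed (auto simp: sums_0)

lemma lf_add:
  fixes \<mu> \<nu> :: "(nat \<Rightarrow> 'a::metric_space) set \<Rightarrow> complex"
  assumes "locfin_measure n \<mu>" "locfin_measure n \<nu>"
  shows "locfin_measure n (\<mu> + \<nu>)"
proof (rule lf_intro)
  fix A :: "(nat \<Rightarrow> 'a) set" assume A: "A \<notin> bsets n" then show "(\<mu> + \<nu>) A = 0"
    by (simp add: lf_zero_out[OF assms(1) A] lf_zero_out[OF assms(2) A])
next
  fix F :: "nat \<Rightarrow> (nat \<Rightarrow> 'a) set" assume "range F \<subseteq> bsets n" "disjoint_family F" "\<Union> (range F) \<in> bsets n"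
  then show "(\<lambda>i. (\<mu> + \<nu>) (F i)) sums (\<mu> + \<nu>) (\<Union> (range F))"
    using lf_sums[OF assms(1)] lf_sums[OF assms(2)] by (simp add: sums_add)
next
  fix A :: "(nat \<Rightarrow> 'a) set" and e :: real assume A: "A \<in> bsets n" and e: "e > 0"
  then have e2: "e/2 > 0" by simp
  obtain K1 U1 where 1: "compactin (prod_top n) K1" "openin (prod_top n) U1" "K1 \<subseteq> A" "A \<subseteq> U1"
      "\<And>B. B \<in> bsets n \<Longrightarrow> B \<subseteq> U1 - K1 \<Longrightarrow> cmod (\<mu> B) < e/2"
    using lf_reg[OF assms(1) A e2] by blast
  obtain K2 U2 where 2: "compactin (prod_top n) K2" "openin (prod_top n) U2" "K2 \<subseteq> A" "A \<subseteq> U2"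
      "\<And>B. B \<in> bsets n \<Longrightarrow> B \<subseteq> U2 - K2 \<Longrightarrow> cmod (\<nu> B) < e/2"
    using lf_reg[OF assms(2) A e2] by blast
  show "\<exists>K U. compactin (prod_top n) K \<and> openin (prod_top n) U \<and> K \<subseteq> A \<and> A \<subseteq> U \<and>
          (\<forall>B\<in>bsets n. B \<subseteq> U - K \<longrightarrow> cmod ((\<mu> + \<nu>) B) < e)"
  proof (intro exI conjI ballI impI)
    show "compactin (prod_top n) (K1 \<union> K2)" using compactin_Un[OF 1(1) 2(1)] .
    show "openin (prod_top n) (U1 \<inter> U2)" using openin_Int[OF 1(2) 2(2)] .
    show "K1 \<union> K2 \<subseteq> A" using 1(3) 2(3) by (rule Un_least)
    show "A \<subseteq> U1 \<inter> U2" using 1(4) 2(4) by (rule Int_greatest)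
    fix B assume B: "B \<in> bsets n" "B \<subseteq> U1 \<inter> U2 - (K1 \<union> K2)"
    then have "B \<subseteq> U1 - K1" "B \<subseteq> U2 - K2" by auto
    then have "cmod (\<mu> B) < e/2" "cmod (\<nu> B) < e/2" using 1(5) 2(5) B(1) by auto
    then show "cmod ((\<mu> + \<nu>) B) < e" using norm_triangle_ineq[of "\<mu> B" "\<nu> B"] by simp
  qed
qed

lemma lf_scale:
  fixes \<mu> :: "(nat \<Rightarrow> 'a::metric_space) set \<Rightarrow> complex"
  assumes "locfin_measure n \<mu>"
  shows "locfin_measure n (\<lambda>A. c * \<mu> A)"
proof (rule lf_intro)
  fix A :: "(nat \<Rightarrow> 'a) set" assume A: "A \<notin> bsets n" then show "c * \<mu> A = 0"
    by (simp add: lf_zero_out[OF assms(1) A])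
next
  fix F :: "nat \<Rightarrow> (nat \<Rightarrow> 'a) set" assume "range F \<subseteq> bsets n" "disjoint_family F" "\<Union> (range F) \<in> bsets n"
  then show "(\<lambda>i. c * \<mu> (F i)) sums (c * \<mu> (\<Union> (range F)))"
    using lf_sums[OF assms(1)] by (simp add: sums_mult)
next
  fix A :: "(nat \<Rightarrow> 'a) set" and e :: real assume A: "A \<in> bsets n" and e: "e > 0"
  have e': "e / (cmod c + 1) > 0" using e by (intro divide_pos_pos) (auto intro: add_nonneg_pos)
  obtain K U where 1: "compactin (prod_top n) K" "openin (prod_top n) U" "K \<subseteq> A" "A \<subseteq> U"
      "\<And>B. B \<in> bsets n \<Longrightarrow> B \<subseteq> U - K \<Longrightarrow> cmod (\<mu> B) < e / (cmod c + 1)"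
    using lf_reg[OF assms(1) A e'] by blast
  show "\<exists>K U. compactin (prod_top n) K \<and> openin (prod_top n) U \<and> K \<subseteq> A \<and> A \<subseteq> U \<and>
          (\<forall>B\<in>bsets n. B \<subseteq> U - K \<longrightarrow> cmod (c * \<mu> B) < e)"
  proof (intro exI conjI ballI impI)
    show "compactin (prod_top n) K" "openin (prod_top n) U" "K \<subseteq> A" "A \<subseteq> U" using 1(1-4) by auto
    fix B assume "B \<in> bsets n" "B \<subseteq> U - K"
    then have b: "cmod (\<mu> B) < e / (cmod c + 1)" using 1(5) by blast
    have p: "cmod c + 1 > 0" using norm_ge_zero[of c] by linarith
    have q: "cmod c / (cmod c + 1) < 1" using p by (simp add: divide_less_eq)
    have "cmod (c * \<mu> B) = cmod c * cmod (\<mu> B)" by (simp add: norm_mult)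
    also have "\<dots> \<le> cmod c * (e / (cmod c + 1))" using b by (intro mult_left_mono) auto
    also have "\<dots> = e * (cmod c / (cmod c + 1))" by simp
    also have "\<dots> < e * 1" using e q by (intro mult_strict_left_mono) auto
    also have "\<dots> = e" by simp
    finally show "cmod (c * \<mu> B) < e" .
  qed
qed

lemma diag_mono: "R \<le> R' \<Longrightarrow> diag_thick n R \<subseteq> diag_thick n R'"
proof
  fix x assume "R \<le> R'" "x \<in> diag_thick n R"
  then show "x \<in> diag_thick n R'" unfolding diag_thick_def by (auto intro: order_trans)
qed

lemma sid_mono: "supp_in_diag n R \<mu> \<Longrightarrow> R \<le> R' \<Longrightarrow> supp_in_diag n R' \<mu>"
  unfolding supp_in_diag_def using diag_mono by blast

lemma supp_mono: "supported_on n Y \<mu> \<Longrightarrow> Y \<subseteq> Y' \<Longrightarrow> supported_on n Y' \<mu>"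
proof -
  assume s: "supported_on n Y \<mu>" and Y: "Y \<subseteq> Y'"
  have c: "cube n Y \<subseteq> cube n Y'" unfolding cube_def using Y by (intro PiE_mono) auto
  show ?thesis unfolding supported_on_def
  proof (intro ballI impI)
    fix A assume "A \<in> bsets n" "A \<inter> cube n Y' = {}"
    then show "\<mu> A = 0" using s c unfolding supported_on_def by blast
  qed
qed

lemma cc_zero: "coarse_chain n (\<lambda>A. 0)"
  unfolding coarse_chain_def supp_in_diag_def by (simp add: lf_zero)

lemma cc_add: assumes "coarse_chain n \<mu>" "coarse_chain n \<nu>" shows "coarse_chain n (\<mu> + \<nu>)"
proof -
  obtain R1 R2 where "supp_in_diag n R1 \<mu>" "supp_in_diag n R2 \<nu>" using assms unfolding coarse_chain_def by blast
  then have "supp_in_diag n (max R1 R2) \<mu>" "supp_in_diag n (max R1 R2) \<nu>" using sid_mono by fastforce+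
  then have "supp_in_diag n (max R1 R2) (\<mu> + \<nu>)" unfolding supp_in_diag_def by simp
  then show ?thesis using assms lf_add unfolding coarse_chain_def by blast
qed

lemma cc_scale: assumes "coarse_chain n \<mu>" shows "coarse_chain n (\<lambda>A. c * \<mu> A)"
  using assms lf_scale unfolding coarse_chain_def supp_in_diag_def by fastforce

lemma cc_sum: "finite I \<Longrightarrow> (\<And>i. i \<in> I \<Longrightarrow> coarse_chain n (f i)) \<Longrightarrow> coarse_chain n (\<lambda>A. \<Sum>i\<in>I. f i A)"
proof (induction I rule: finite_induct)
  case empty then show ?case by (simp add: cc_zero)
next
  case (insert x F)
  have "coarse_chain n (f x + (\<lambda>A. \<Sum>i\<in>F. f i A))" using insert by (intro cc_add) auto
  then show ?case using insert by (simp add: plus_fun_def)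
qed


lemma cont_dist_coords:
  "continuous_map (product_topology (\<lambda>_. euclidean) I) euclideanreal (\<lambda>x::nat\<Rightarrow>'a::metric_space. dist (x i) (x j))"
  if "i \<in> I" "j \<in> I"
proof -
  have 1: "continuous_map (product_topology (\<lambda>_. euclidean) I) (prod_topology euclidean euclidean) (\<lambda>x::nat\<Rightarrow>'a. (x i, x j))"
    using that by (intro continuous_map_pairedI continuous_map_product_projection)
  have 2: "continuous_map (prod_topology euclidean euclidean) euclideanreal (\<lambda>p::'a\<times>'a. dist (fst p) (snd p))"
    by (simp add: euclidean_product_topology continuous_on_dist continuous_on_fst continuous_on_snd continuous_on_id)
  show ?thesis using continuous_map_compose[OF 1 2] by (simp add: o_def)
qed

lemma proper_compact: "proper_metric_space TYPE('a::metric_space) \<Longrightarrow> compact (cball (x::'a) r)"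
  unfolding proper_metric_space_def by blast

lemma dense_Q:
  assumes "proper_metric_space TYPE('a::metric_space)"
  obtains Q :: "'a::metric_space set" where "countable Q" "\<And>y e. e > 0 \<Longrightarrow> \<exists>q\<in>Q. dist y q < e"
proof -
  define x0 :: 'a where "x0 = undefined"
  have ex: "\<exists>C. finite C \<and> cball x0 (real k) \<subseteq> (\<Union>c\<in>C. ball c (inverse (real (Suc m))))" for k m
  proof -
    have cov: "cball x0 (real k) \<subseteq> (\<Union>c\<in>cball x0 (real k). ball c (inverse (real (Suc m))))"
      by auto
    obtain C' where "C' \<subseteq> cball x0 (real k)" "finite C'"
        "cball x0 (real k) \<subseteq> (\<Union>c\<in>C'. ball c (inverse (real (Suc m))))"
      using compactE_image[OF proper_compact[OF assms] _ cov] by blast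
    then show ?thesis by blast
  qed
  have "\<forall>k. \<exists>f. \<forall>m. finite (f m) \<and> cball x0 (real k) \<subseteq> (\<Union>c\<in>f m. ball c (inverse (real (Suc m))))"
    using ex by (intro allI choice) blast
  then have "\<exists>CC. \<forall>k. \<forall>m. finite (CC k m) \<and> cball x0 (real k) \<subseteq> (\<Union>c\<in>CC k m. ball c (inverse (real (Suc m))))"
    by (rule choice)
  then obtain CC where CC0: "\<forall>k. \<forall>m. finite (CC k m) \<and> cball x0 (real k) \<subseteq> (\<Union>c\<in>CC k m. ball c (inverse (real (Suc m))))"
    by (elim exE)
  have CC: "finite (CC k m) \<and> cball x0 (real k) \<subseteq> (\<Union>c\<in>CC k m. ball c (inverse (real (Suc m))))" for k m
    using CC0 by blast
  define Q where "Q = (\<Union>k. \<Union>m. CC k m)"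
  have cc: "countable (CC k m)" for k m using CC countable_finite by blast
  have "countable Q" unfolding Q_def by (intro countable_UN) (auto intro: cc)
  moreover have "\<exists>q\<in>Q. dist y q < e" if e: "e > 0" for y e
  proof -
    obtain m where m: "inverse (real (Suc m)) < e" using reals_Archimedean[OF e] by blast
    define k where "k = nat \<lceil>dist x0 y\<rceil>"
    have "y \<in> cball x0 (real k)" unfolding k_def by (simp add: real_nat_ceiling_ge)
    then obtain c where c: "c \<in> CC k m" "y \<in> ball c (inverse (real (Suc m)))" using CC by blast
    then have "dist y c < e" using m by (simp add: dist_commute)
    moreover have "c \<in> Q" using c unfolding Q_def by blast
    ultimately show ?thesis by blast
  qed
  ultimately show ?thesis using that by blast
qed

lemma meas_pre: "f \<in> measurable M N \<Longrightarrow> A \<in> sets N \<Longrightarrow> {x\<in>space M. f x \<in> A} \<in> sets M"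
proof -
  assume f: "f \<in> measurable M N" and A: "A \<in> sets N"
  have "{x\<in>space M. f x \<in> A} = f -` A \<inter> space M" by auto
  then show ?thesis using measurable_sets[OF f A] by simp
qed

lemma le_of_all_inverse:
  fixes d s :: real
  assumes "\<And>k. d \<le> s + c * inverse (real (Suc k))" "c \<ge> 0"
  shows "d \<le> s"
proof (rule ccontr)
  assume "\<not> d \<le> s"
  then have "(d - s) / (c + 1) > 0" using assms(2) by (intro divide_pos_pos) auto
  then obtain k where k: "inverse (real (Suc k)) < (d - s) / (c + 1)" using reals_Archimedean by blast
  have "c * inverse (real (Suc k)) \<le> (c + 1) * inverse (real (Suc k))" by (simp add: distrib_right)
  also have "\<dots> < (c + 1) * ((d - s) / (c + 1))" using k assms(2) by (intro mult_strict_left_mono) auto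
  also have "\<dots> = d - s" using assms(2) by simp
  finally show False using assms(1)[of k] by linarith
qed

lemma meas_dist_le:
  fixes f g :: "'b \<Rightarrow> 'a::metric_space" and Q :: "'a set"
  assumes Q: "countable Q" "\<And>y e. e > 0 \<Longrightarrow> \<exists>q\<in>Q. dist y q < e"
    and f: "f \<in> measurable M borel" and g: "g \<in> measurable M borel"
  shows "{x\<in>space M. dist (f x) (g x) \<le> s} \<in> sets M"
proof -
  define T where "T k q = {x\<in>space M. f x \<in> ball q (inverse (real (Suc k)))} \<inter>
       {x\<in>space M. g x \<in> cball q (s + inverse (real (Suc k)))}" for k q
  have T: "T k q \<in> sets M" for k q
    unfolding T_def by (intro sets.Int meas_pre[OF f] meas_pre[OF g]) auto
  have eq: "{x\<in>space M. dist (f x) (g x) \<le> s} = (\<Inter>k. \<Union>q\<in>Q. T k q)"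
  proof (intro equalityI subsetI)
    fix x assume x: "x \<in> {x\<in>space M. dist (f x) (g x) \<le> s}"
    show "x \<in> (\<Inter>k. \<Union>q\<in>Q. T k q)"
    proof
      fix k :: nat
      obtain q where q: "q \<in> Q" "dist (f x) q < inverse (real (Suc k))" using Q(2)[of "inverse (real (Suc k))"] by auto
      have "dist q (g x) \<le> dist q (f x) + dist (f x) (g x)" by (rule dist_triangle)
      then have "x \<in> T k q" using x q by (auto simp: T_def dist_commute)
      then show "x \<in> (\<Union>q\<in>Q. T k q)" using q by blast
    qed
  next
    fix x assume x: "x \<in> (\<Inter>k. \<Union>q\<in>Q. T k q)"
    then have xs: "x \<in> space M" unfolding T_def by blast
    have "dist (f x) (g x) \<le> s + 2 * inverse (real (Suc k))" for k
    proof -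
      obtain q where "x \<in> T k q" using x by blast
      then have "dist q (f x) < inverse (real (Suc k))" "dist q (g x) \<le> s + inverse (real (Suc k))"
        unfolding T_def by auto
      moreover have "dist (f x) (g x) \<le> dist q (f x) + dist q (g x)" by (rule dist_triangle3)
      ultimately show ?thesis by linarith
    qed
    then have "dist (f x) (g x) \<le> s" by (rule le_of_all_inverse) simp
    then show "x \<in> {x\<in>space M. dist (f x) (g x) \<le> s}" using xs by blast
  qed
  have U: "\<And>k. (\<Union>q\<in>Q. T k q) \<in> sets M" by (rule sets.countable_UN''[OF Q(1)]) (rule T)
  show ?thesis unfolding eq by (intro sets.countable_INT) (auto intro: U)
qed

lemma cube_sets: "closed Y \<Longrightarrow> cube n Y \<in> sets (PM n)"
  unfolding cube_def by (intro sets_PiM_I_finite) auto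

definition pw :: "nat \<Rightarrow> real \<Rightarrow> (nat \<Rightarrow> 'a::metric_space) set" where
  "pw n s = {x \<in> cube n UNIV. \<forall>i\<le>n. \<forall>j\<le>n. dist (x i) (x j) \<le> s}"

lemma pw_sets:
  assumes "proper_metric_space TYPE('a::metric_space)"
  shows "(pw n s :: (nat \<Rightarrow> 'a) set) \<in> sets (PM n)"
proof -
  obtain Q :: "'a set" where Q: "countable Q" "\<And>y e. e > 0 \<Longrightarrow> \<exists>q\<in>Q. dist y q < e"
    using dense_Q[OF assms] by blast
  have eq: "(pw n s :: (nat \<Rightarrow> 'a) set) = (\<Inter>i\<in>{..n}. \<Inter>j\<in>{..n}. {x\<in>space (PM n). dist (x i) (x j) \<le> s})"
    unfolding pw_def space_PM by auto
  show ?thesis unfolding eq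
    by (intro sets.finite_INT meas_dist_le[OF Q] measurable_component_singleton) auto
qed

lemma pw_closed: "closedin (prod_top n) (pw n s)"
proof -
  have eq: "pw n s = (\<Inter>i\<in>{..n}. \<Inter>j\<in>{..n}. {x\<in>topspace (prod_top n). dist (x i) (x j) \<in> {..s}})"
    unfolding pw_def prod_top_def cube_def by auto
  have "closedin (product_topology (\<lambda>_. euclidean) {..n}) {x\<in>topspace (prod_top n). dist (x i) (x j) \<in> {..s}}"
    if "i \<le> n" "j \<le> n" for i j
    unfolding prod_top_def
    by (rule closedin_continuous_map_preimage[OF cont_dist_coords]) (use that in auto)
  then show ?thesis unfolding eq prod_top_def by (intro closedin_INT) auto
qed

lemma diag_pw: "diag_thick n R \<subseteq> pw n (2 * R)"
proof
  fix x assume "x \<in> diag_thick n R"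
  then obtain y where x: "x \<in> cube n UNIV" "\<And>i. i \<le> n \<Longrightarrow> dist (x i) y \<le> R"
    unfolding diag_thick_def by blast
  have "dist (x i) (x j) \<le> 2 * R" if "i \<le> n" "j \<le> n" for i j
    using dist_triangle[of "x i" "x j" y] x(2)[OF that(1)] x(2)[OF that(2)] by (simp add: dist_commute)
  then show "x \<in> pw n (2 * R)" using x unfolding pw_def by blast
qed

lemma diag_sets:
  assumes "proper_metric_space TYPE('a::metric_space)"
  shows "(diag_thick n R :: (nat \<Rightarrow> 'a) set) \<in> sets (PM n)"
proof -
  obtain Q :: "'a set" where Q: "countable Q" "\<And>y e. e > 0 \<Longrightarrow> \<exists>q\<in>Q. dist y q < e"
    using dense_Q[OF assms] by blast
  define T :: "nat \<Rightarrow> 'a \<Rightarrow> (nat \<Rightarrow> 'a) set"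
    where "T k q = PiE {..n} (\<lambda>_. cball q (R + inverse (real (Suc k))))" for k q
  have T: "T k q \<in> sets (PM n)" for k q unfolding T_def by (intro sets_PiM_I_finite) auto
  have eq: "diag_thick n R = (\<Inter>k. \<Union>q\<in>Q. T k q)"
  proof (intro equalityI subsetI)
    fix x :: "nat \<Rightarrow> 'a" assume "x \<in> diag_thick n R"
    then obtain y where x: "x \<in> cube n UNIV" "\<And>i. i \<le> n \<Longrightarrow> dist (x i) y \<le> R"
      unfolding diag_thick_def by blast
    show "x \<in> (\<Inter>k. \<Union>q\<in>Q. T k q)"
    proof
      fix k :: nat
      obtain q where q: "q \<in> Q" "dist y q < inverse (real (Suc k))" using Q(2)[of "inverse (real (Suc k))"] by auto
      have "dist q (x i) \<le> R + inverse (real (Suc k))" if "i \<le> n" for i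
        using dist_triangle[of q "x i" y] x(2)[OF that] q(2) by (simp add: dist_commute)
      then have "x \<in> T k q" using x(1) unfolding T_def cube_def by (auto simp: PiE_iff)
      then show "x \<in> (\<Union>q\<in>Q. T k q)" using q by blast
    qed
  next
    fix x :: "nat \<Rightarrow> 'a" assume x: "x \<in> (\<Inter>k. \<Union>q\<in>Q. T k q)"
    then have "\<forall>k. \<exists>q. x \<in> T k q" by blast
    then obtain qk where qk: "\<And>k. x \<in> T k (qk k)" by metis
    then have xc: "x \<in> cube n UNIV" unfolding T_def cube_def by (auto simp: PiE_iff)
    have qd: "dist (qk k) (x i) \<le> R + inverse (real (Suc k))" if "i \<le> n" for i k
      using qk[of k] that unfolding T_def by (auto simp: PiE_iff)
    have "qk k \<in> cball (x 0) (R + 1)" for k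
    proof -
      have "inverse (real (Suc k)) \<le> 1" by (simp add: inverse_le_1_iff)
      then show ?thesis using qd[of 0 k] by (simp add: dist_commute)
    qed
    then obtain l r where lr: "strict_mono (r :: nat \<Rightarrow> nat)" "(qk \<circ> r) \<longlonglongrightarrow> l"
      using seq_compactE[OF compact_imp_seq_compact[OF proper_compact[OF assms]]] by metis
    have "dist (x i) l \<le> R" if i: "i \<le> n" for i
    proof -
      have 1: "(\<lambda>k. dist ((qk \<circ> r) k) (x i)) \<longlonglongrightarrow> dist l (x i)"
        by (intro tendsto_dist lr(2) tendsto_const)
      have 2: "(\<lambda>k. R + ((\<lambda>k. inverse (real (Suc k))) \<circ> r) k) \<longlonglongrightarrow> R + 0"
        by (intro tendsto_add tendsto_const LIMSEQ_subseq_LIMSEQ[OF LIMSEQ_inverse_real_of_nat lr(1)])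
      have "dist l (x i) \<le> R + 0"
        by (rule LIMSEQ_le[OF 1 2]) (use qd i in auto)
      then show ?thesis by (simp add: dist_commute)
    qed
    then show "x \<in> diag_thick n R" using xc unfolding diag_thick_def by blast
  qed
  have U: "\<And>k. (\<Union>q\<in>Q. T k q) \<in> sets (PM n)" by (rule sets.countable_UN''[OF Q(1)]) (rule T)
  show ?thesis unfolding eq by (intro sets.countable_INT) (auto intro: U)
qed

lemma omit_meas: "omit n i \<in> measurable (PM (Suc n)) (PM n :: (nat \<Rightarrow> 'a::metric_space) measure)"
proof -
  have "(\<lambda>x j. (\<lambda>j x. if j \<le> n then (if j < i then x j else x (Suc j)) else undefined) j x)
        \<in> measurable (PM (Suc n)) (PM n :: (nat \<Rightarrow> 'a::metric_space) measure)"
  proof (rule measurable_PiM_single')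
    fix j assume j: "j \<in> {..n}"
    show "(\<lambda>x::nat \<Rightarrow> 'a. if j \<le> n then (if j < i then x j else x (Suc j)) else undefined) \<in> measurable (PM (Suc n)) borel"
      using j by (cases "j < i") (auto intro!: measurable_component_singleton)
  qed (auto simp: space_PiM PiE_iff extensional_def)
  then show ?thesis by (simp add: omit_def[abs_def])
qed

lemma omit_cont: "continuous_map (prod_top (Suc n)) (prod_top n) (omit n i)"
  unfolding prod_top_def continuous_map_componentwise
proof (intro conjI ballI)
  show "omit n i ` topspace (product_topology (\<lambda>_. euclidean) {..Suc n}) \<subseteq> extensional {..n}"
    by (auto simp: omit_def extensional_def)
  fix k assume k: "k \<in> {..n}"
  show "continuous_map (product_topology (\<lambda>_. euclidean) {..Suc n}) euclidean (\<lambda>x. omit n i x k)"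
    using k by (cases "k < i") (auto simp: omit_def intro!: continuous_map_product_projection)
qed

lemma omit_cube: "x \<in> cube (Suc n) Y \<Longrightarrow> omit n i x \<in> cube n Y"
  unfolding cube_def omit_def by (auto simp: PiE_iff extensional_def)

lemma omit_diag: "x \<in> diag_thick (Suc n) R \<Longrightarrow> omit n i x \<in> diag_thick n R"
proof -
  assume "x \<in> diag_thick (Suc n) R"
  then obtain y where x: "x \<in> cube (Suc n) UNIV" "\<And>k. k \<le> Suc n \<Longrightarrow> dist (x k) y \<le> R"
    unfolding diag_thick_def by blast
  have "dist (omit n i x j) y \<le> R" if "j \<le> n" for j
    using that x(2)[of j] x(2)[of "Suc j"] by (auto simp: omit_def)
  then show ?thesis using omit_cube[OF x(1)] unfolding diag_thick_def by blast
qed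

lemma omit_other:
  assumes "i \<le> Suc n" "k \<le> Suc n" "k \<noteq> i"
  shows "\<exists>j\<le>n. omit n i x j = x k"
proof (cases "k < i")
  case True then show ?thesis using assms by (intro exI[of _ k]) (auto simp: omit_def)
next
  case False
  then obtain k' where k': "k = Suc k'" using assms(3) by (cases k) auto
  then show ?thesis using assms False by (intro exI[of _ k']) (auto simp: omit_def)
qed

lemma pre_bsets:
  assumes A: "A \<in> bsets n" and i: "i \<le> Suc n" and S: "S \<in> sets (PM (Suc n))" "S \<subseteq> pw (Suc n) s"
  shows "omit n i -` A \<inter> S \<in> bsets (Suc n)"
proof -
  obtain x0 r where xr: "\<forall>x\<in>A. \<forall>j\<le>n. dist (x j) x0 \<le> r" using A unfolding bsets_def by blast
  have "omit n i -` A \<inter> S = (omit n i -` A \<inter> space (PM (Suc n))) \<inter> S"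
    using sets.sets_into_space[OF S(1)] by blast
  also have "\<dots> \<in> sets (PM (Suc n))"
    by (intro sets.Int measurable_sets[OF omit_meas] bsets_sets A S(1))
  finally have m: "omit n i -` A \<inter> S \<in> sets (PM (Suc n))" .
  define k' where "k' = (if i = 0 then 1 else 0 :: nat)"
  have k': "k' \<le> Suc n" "k' \<noteq> i" unfolding k'_def by auto
  have "dist (x k) x0 \<le> s + r" if x: "x \<in> omit n i -` A \<inter> S" and k: "k \<le> Suc n" for x k
  proof -
    obtain j where j: "j \<le> n" "omit n i x j = x k'" using omit_other[OF i k'] by blast
    have "dist (x k') x0 \<le> r" using xr x j by (metis IntD1 vimageE)
    moreover have "dist (x k) (x k') \<le> s" using x S(2) k k' unfolding pw_def by blast
    moreover have "dist (x k) x0 \<le> dist (x k) (x k') + dist (x k') x0" by (rule dist_triangle)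
    ultimately show ?thesis by linarith
  qed
  then show ?thesis using m unfolding bsets_def by blast
qed

lemma pf_indep_le:
  assumes P: "proper_metric_space TYPE('a::metric_space)"
    and lf: "locfin_measure (Suc n) (\<mu> :: (nat \<Rightarrow> 'a) set \<Rightarrow> complex)"
    and s1: "supp_in_diag (Suc n) R1 \<mu>" and le: "R1 \<le> R2"
    and A: "A \<in> bsets n" and i: "i \<le> Suc n"
  shows "\<mu> (omit n i -` A \<inter> diag_thick (Suc n) R2) = \<mu> (omit n i -` A \<inter> diag_thick (Suc n) R1)"
proof -
  define X where "X = omit n i -` A \<inter> diag_thick (Suc n) R2"
  have X: "X \<in> bsets (Suc n)" unfolding X_def
    by (rule pre_bsets[OF A i diag_sets[OF P] diag_pw])
  have "\<mu> X = \<mu> (X \<inter> diag_thick (Suc n) R1) + \<mu> (X - diag_thick (Suc n) R1)"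
    by (rule lf_split[OF lf X diag_sets[OF P]])
  moreover have "X \<inter> diag_thick (Suc n) R1 = omit n i -` A \<inter> diag_thick (Suc n) R1"
    unfolding X_def using diag_mono[OF le] by blast
  moreover have "\<mu> (X - diag_thick (Suc n) R1) = 0"
    using s1 bsets_Diff[OF X diag_sets[OF P]] unfolding supp_in_diag_def by blast
  ultimately show ?thesis unfolding X_def by simp
qed

lemma pf_eq:
  assumes P: "proper_metric_space TYPE('a::metric_space)"
    and lf: "locfin_measure (Suc n) (\<mu> :: (nat \<Rightarrow> 'a) set \<Rightarrow> complex)"
    and s: "supp_in_diag (Suc n) R \<mu>" and i: "i \<le> Suc n"
  shows "pushfwd n i \<mu> A = (if A \<in> bsets n then \<mu> (omit n i -` A \<inter> diag_thick (Suc n) R) else 0)"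
proof (cases "A \<in> bsets n")
  case True
  define R0 where "R0 = (SOME R. supp_in_diag (Suc n) R \<mu>)"
  have s0: "supp_in_diag (Suc n) R0 \<mu>" unfolding R0_def using s by (rule someI)
  have "\<mu> (omit n i -` A \<inter> diag_thick (Suc n) R0) = \<mu> (omit n i -` A \<inter> diag_thick (Suc n) R)"
  proof (cases "R0 \<le> R")
    case True then show ?thesis using pf_indep_le[OF P lf s0 True \<open>A \<in> bsets n\<close> i] by simp
  next
    case False then show ?thesis using pf_indep_le[OF P lf s _ \<open>A \<in> bsets n\<close> i, of R0] by simp
  qed
  then show ?thesis using True unfolding pushfwd_def R0_def by simp
qed (simp add: pushfwd_def)

lemma pf_add:
  assumes P: "proper_metric_space TYPE('a::metric_space)"
    and m: "coarse_chain (Suc n) (\<mu> :: (nat \<Rightarrow> 'a) set \<Rightarrow> complex)" and v: "coarse_chain (Suc n) \<nu>"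
    and i: "i \<le> Suc n"
  shows "pushfwd n i (\<mu> + \<nu>) = pushfwd n i \<mu> + pushfwd n i \<nu>"
proof -
  obtain R1 R2 where "supp_in_diag (Suc n) R1 \<mu>" "supp_in_diag (Suc n) R2 \<nu>" using m v unfolding coarse_chain_def by blast
  then have s: "supp_in_diag (Suc n) (max R1 R2) \<mu>" "supp_in_diag (Suc n) (max R1 R2) \<nu>" using sid_mono by fastforce+
  then have s3: "supp_in_diag (Suc n) (max R1 R2) (\<mu> + \<nu>)" unfolding supp_in_diag_def by simp
  have lf: "locfin_measure (Suc n) \<mu>" "locfin_measure (Suc n) \<nu>" using m v unfolding coarse_chain_def by auto
  show ?thesis
    by (rule ext) (simp add: pf_eq[OF P lf(1) s(1) i] pf_eq[OF P lf(2) s(2) i] pf_eq[OF P lf_add[OF lf] s3 i])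
qed

lemma pf_scale:
  assumes P: "proper_metric_space TYPE('a::metric_space)"
    and m: "coarse_chain (Suc n) (\<mu> :: (nat \<Rightarrow> 'a) set \<Rightarrow> complex)" and i: "i \<le> Suc n"
  shows "pushfwd n i (\<lambda>A. c * \<mu> A) = (\<lambda>A. c * pushfwd n i \<mu> A)"
proof -
  obtain R where s: "supp_in_diag (Suc n) R \<mu>" using m unfolding coarse_chain_def by blast
  then have s2: "supp_in_diag (Suc n) R (\<lambda>A. c * \<mu> A)" unfolding supp_in_diag_def by simp
  have lf: "locfin_measure (Suc n) \<mu>" using m unfolding coarse_chain_def by auto
  show ?thesis
    by (rule ext) (simp add: pf_eq[OF P lf s i] pf_eq[OF P lf_scale[OF lf] s2 i])
qed

lemma pf_zero: "pushfwd n i (\<lambda>A. 0) = (\<lambda>A. 0)"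
  by (simp add: pushfwd_def fun_eq_iff)

lemma bd_add:
  assumes P: "proper_metric_space TYPE('a::metric_space)"
    and m: "coarse_chain n (\<mu> :: (nat \<Rightarrow> 'a) set \<Rightarrow> complex)" and v: "coarse_chain n \<nu>"
  shows "bd n (\<mu> + \<nu>) = bd n \<mu> + bd n \<nu>"
proof (cases n)
  case 0 then show ?thesis by (simp add: fun_eq_iff)
next
  case (Suc k)
  show ?thesis using m v unfolding Suc
    by (simp add: fun_eq_iff pf_add[OF P] sum.distrib ring_distribs)
qed

lemma bd_scale:
  assumes P: "proper_metric_space TYPE('a::metric_space)"
    and m: "coarse_chain n (\<mu> :: (nat \<Rightarrow> 'a) set \<Rightarrow> complex)"
  shows "bd n (\<lambda>A. c * \<mu> A) = (\<lambda>A. c * bd n \<mu> A)"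
proof (cases n)
  case 0 then show ?thesis by (simp add: fun_eq_iff)
next
  case (Suc k)
  show ?thesis using m unfolding Suc
    by (simp add: fun_eq_iff pf_scale[OF P] sum_distrib_left mult.left_commute right_diff_distrib)
qed

lemma bd_zero: "bd n (\<lambda>A. 0) = (\<lambda>A. 0)"
  by (cases n) (simp_all add: pf_zero fun_eq_iff)

lemma pf_supp:
  assumes lf: "locfin_measure (Suc n) \<mu>" and s: "supported_on (Suc n) Y \<mu>"
  shows "supported_on n Y (pushfwd n i \<mu>)"
  unfolding supported_on_def
proof (intro ballI impI)
  fix A assume A: "A \<in> bsets n" "A \<inter> cube n Y = {}"
  define X where "X = omit n i -` A \<inter> diag_thick (Suc n) (SOME R. supp_in_diag (Suc n) R \<mu>)"
  have "\<mu> X = 0"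
  proof (cases "X \<in> bsets (Suc n)")
    case True
    have "X \<inter> cube (Suc n) Y = {}" unfolding X_def using A(2) omit_cube by blast
    then show ?thesis using s True unfolding supported_on_def by blast
  next
    case False then show ?thesis using lf_zero_out[OF lf] by blast
  qed
  then show "pushfwd n i \<mu> A = 0" using A(1) unfolding pushfwd_def X_def by simp
qed

lemma bd_supp:
  assumes lf: "locfin_measure n \<mu>" and s: "supported_on n Y \<mu>"
  shows "supported_on (n - 1) Y (bd n \<mu>)"
proof (cases n)
  case 0 then show ?thesis by (simp add: supported_on_def)
next
  case (Suc k)
  have "supported_on k Y (pushfwd k i \<mu>)" for i using pf_supp lf s unfolding Suc by blast
  then show ?thesis unfolding Suc supported_on_def by simp
qed

lemma topspace_prod_top: "topspace (prod_top n) = cube n UNIV"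
  by (simp add: prod_top_def cube_def)

lemma pf_chain:
  assumes P: "proper_metric_space TYPE('a::metric_space)"
    and m: "coarse_chain (Suc n) (\<mu> :: (nat \<Rightarrow> 'a) set \<Rightarrow> complex)" and i: "i \<le> Suc n"
  shows "coarse_chain n (pushfwd n i \<mu>)"
proof -
  obtain R where s: "supp_in_diag (Suc n) R \<mu>" using m unfolding coarse_chain_def by blast
  have lf: "locfin_measure (Suc n) \<mu>" using m unfolding coarse_chain_def by auto
  define D :: "(nat \<Rightarrow> 'a) set" where "D = diag_thick (Suc n) R"
  have Ds: "D \<in> sets (PM (Suc n))" unfolding D_def by (rule diag_sets[OF P])
  have Dpw: "D \<subseteq> pw (Suc n) (2 * R)" unfolding D_def by (rule diag_pw)
  have pfe: "pushfwd n i \<mu> = (\<lambda>A. if A \<in> bsets n then \<mu> (omit n i -` A \<inter> D) else 0)"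
    unfolding D_def by (rule ext) (rule pf_eq[OF P lf s i])
  have pb: "omit n i -` A \<inter> D \<in> bsets (Suc n)" if "A \<in> bsets n" for A
    by (rule pre_bsets[OF that i Ds Dpw])
  have "locfin_measure n (pushfwd n i \<mu>)"
    unfolding pfe
  proof (rule lf_intro)
    fix A :: "(nat \<Rightarrow> 'a) set" assume "A \<notin> bsets n" then show "(if A \<in> bsets n then \<mu> (omit n i -` A \<inter> D) else 0) = 0" by simp
  next
    fix F :: "nat \<Rightarrow> (nat \<Rightarrow> 'a) set"
    assume F: "range F \<subseteq> bsets n" "disjoint_family F" "\<Union> (range F) \<in> bsets n"
    define G where "G k = omit n i -` F k \<inter> D" for k
    have "range G \<subseteq> bsets (Suc n)" using F(1) pb unfolding G_def by blast
    moreover have "disjoint_family G" using F(2) unfolding G_def disjoint_family_on_def by blast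
    moreover have UG: "\<Union>(range G) = omit n i -` (\<Union>(range F)) \<inter> D" unfolding G_def by blast
    ultimately have "(\<lambda>k. \<mu> (G k)) sums \<mu> (omit n i -` (\<Union>(range F)) \<inter> D)"
      using lf_sums[OF lf] pb[OF F(3)] by metis
    moreover have "F k \<in> bsets n" for k using F(1) by blast
    ultimately show "(\<lambda>k. if F k \<in> bsets n then \<mu> (omit n i -` F k \<inter> D) else 0) sums
        (if \<Union> (range F) \<in> bsets n then \<mu> (omit n i -` \<Union> (range F) \<inter> D) else 0)"
      using F(3) unfolding G_def by simp
  next
    fix A :: "(nat \<Rightarrow> 'a) set" and e :: real assume A: "A \<in> bsets n" and e: "e > 0"
    obtain x0 r where xr: "\<forall>x\<in>A. \<forall>j\<le>n. dist (x j) x0 \<le> r" using A unfolding bsets_def by blast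
    define E :: "(nat \<Rightarrow> 'a) set" where "E = pw (Suc n) (2 * R)"
    have Es: "E \<in> sets (PM (Suc n))" unfolding E_def by (rule pw_sets[OF P])
    have Ec: "closedin (prod_top (Suc n)) E" unfolding E_def by (rule pw_closed)
    define A2 where "A2 = omit n i -` A \<inter> E"
    have A2: "A2 \<in> bsets (Suc n)" unfolding A2_def E_def by (rule pre_bsets[OF A i pw_sets[OF P] subset_refl])
    obtain K2 U2 where KU2: "compactin (prod_top (Suc n)) K2" "openin (prod_top (Suc n)) U2" "K2 \<subseteq> A2" "A2 \<subseteq> U2"
        "\<And>B. B \<in> bsets (Suc n) \<Longrightarrow> B \<subseteq> U2 - K2 \<Longrightarrow> cmod (\<mu> B) < e"
      using lf_reg[OF lf A2 e] by blast
    define box :: "(nat \<Rightarrow> 'a) set" where "box = PiE {..Suc n} (\<lambda>_. cball x0 (r + 1 + 2 * R))"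
    have boxc: "compactin (prod_top (Suc n)) box"
      unfolding box_def prod_top_def using proper_compact[OF P] by (simp add: compactin_PiE)
    have Hs: "Hausdorff_space (prod_top k :: (nat \<Rightarrow> 'a) topology)" for k
      unfolding prod_top_def by (simp add: Hausdorff_space_product_topology)
    define F where "F = (E \<inter> box) - U2"
    have Fc: "compactin (prod_top (Suc n)) F"
    proof (rule closed_compactin[OF boxc])
      show "F \<subseteq> box" unfolding F_def by blast
      show "closedin (prod_top (Suc n)) F" unfolding F_def
        using Ec compactin_imp_closedin[OF Hs boxc] KU2(2) by blast
    qed
    define G where "G = omit n i ` F"
    have Gc: "closedin (prod_top n) G" unfolding G_def
      by (rule compactin_imp_closedin[OF Hs image_compactin[OF Fc omit_cont]])
    define K where "K = omit n i ` K2"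
    define U where "U = PiE {..n} (\<lambda>_. ball x0 (r + 1)) - G"
    show "\<exists>K U. compactin (prod_top n) K \<and> openin (prod_top n) U \<and> K \<subseteq> A \<and> A \<subseteq> U \<and>
          (\<forall>B\<in>bsets n. B \<subseteq> U - K \<longrightarrow> cmod (if B \<in> bsets n then \<mu> (omit n i -` B \<inter> D) else 0) < e)"
    proof (intro exI conjI ballI impI)
      show "compactin (prod_top n) K" unfolding K_def by (rule image_compactin[OF KU2(1) omit_cont])
      have "openin (prod_top n) (PiE {..n} (\<lambda>_. ball x0 (r + 1)))"
        unfolding prod_top_def by (simp add: openin_PiE_gen)
      then show "openin (prod_top n) U" unfolding U_def using Gc by blast
      show "K \<subseteq> A" unfolding K_def using KU2(3) unfolding A2_def by blast
      show "A \<subseteq> U"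
      proof
        fix a assume a: "a \<in> A"
        have "a \<in> cube n UNIV" using bsets_space[OF A] a by blast
        moreover have "dist x0 (a j) < r + 1" if "j \<le> n" for j using xr a that by (force simp: dist_commute)
        ultimately have a1: "a \<in> PiE {..n} (\<lambda>_. ball x0 (r + 1))" by (auto simp: cube_def PiE_iff)
        have "a \<notin> G"
        proof
          assume "a \<in> G"
          then obtain x where x: "x \<in> F" "a = omit n i x" unfolding G_def by blast
          then have "x \<in> A2" using a unfolding A2_def F_def by blast
          then show False using x(1) KU2(4) unfolding F_def by blast
        qed
        then show "a \<in> U" using a1 unfolding U_def by blast
      qed
      fix B assume B: "B \<in> bsets n" "B \<subseteq> U - K"
      have sub: "omit n i -` B \<inter> D \<subseteq> U2 - K2"
      proof
        fix x assume x: "x \<in> omit n i -` B \<inter> D"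
        have xE: "x \<in> E" using x Dpw unfolding E_def by blast
        have ob: "omit n i x \<in> U" "omit n i x \<notin> K" using x B(2) by auto
        have xcube: "x \<in> cube (Suc n) UNIV" using x unfolding D_def diag_thick_def by blast
        define k' where "k' = (if i = 0 then 1 else 0 :: nat)"
        have k': "k' \<le> Suc n" "k' \<noteq> i" unfolding k'_def by auto
        obtain j where j: "j \<le> n" "omit n i x j = x k'" using omit_other[OF i k'] by blast
        have "omit n i x \<in> PiE {..n} (\<lambda>_. ball x0 (r + 1))" using ob(1) unfolding U_def by blast
        then have "dist x0 (omit n i x j) < r + 1" using j(1) by (auto simp: PiE_iff)
        then have d1: "dist x0 (x k') < r + 1" using j(2) by simp
        have "dist x0 (x k) \<le> r + 1 + 2 * R" if "k \<le> Suc n" for k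
        proof -
          have "dist (x k) (x k') \<le> 2 * R" using xE that k' unfolding E_def pw_def by blast
          then show ?thesis using d1 dist_triangle[of x0 "x k" "x k'"] by (simp add: dist_commute)
        qed
        then have "x \<in> box" using xcube unfolding box_def cube_def by (auto simp: PiE_iff)
        moreover have "x \<notin> F"
        proof
          assume "x \<in> F" then have "omit n i x \<in> G" unfolding G_def by blast
          then show False using ob(1) unfolding U_def by blast
        qed
        ultimately have "x \<in> U2" using xE unfolding F_def by blast
        moreover have "x \<notin> K2" using ob(2) unfolding K_def by blast
        ultimately show "x \<in> U2 - K2" by blast
      qed
      show "cmod (if B \<in> bsets n then \<mu> (omit n i -` B \<inter> D) else 0) < e"
        using KU2(5)[OF pb[OF B(1)] sub] B(1) by simp
    qed
  qed
  moreover have "supp_in_diag n R (pushfwd n i \<mu>)"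
    unfolding supp_in_diag_def
  proof (intro ballI impI)
    fix A :: "(nat \<Rightarrow> 'a) set" assume A: "A \<in> bsets n" "A \<inter> diag_thick n R = {}"
    then have "omit n i -` A \<inter> D = {}" unfolding D_def using omit_diag by blast
    then show "pushfwd n i \<mu> A = 0" using A(1) lf_empty[OF lf] by (simp add: pfe)
  qed
  ultimately show ?thesis unfolding coarse_chain_def by blast
qed

lemma bd_chain:
  assumes P: "proper_metric_space TYPE('a::metric_space)"
    and m: "coarse_chain n (\<mu> :: (nat \<Rightarrow> 'a) set \<Rightarrow> complex)"
  shows "coarse_chain (n - 1) (bd n \<mu>)"
proof (cases n)
  case 0 then show ?thesis by (simp add: cc_zero)
next
  case (Suc k)
  have "coarse_chain k (\<lambda>A. \<Sum>i\<le>Suc k. (-1) ^ i * pushfwd k i \<mu> A)"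
    using m unfolding Suc by (intro cc_sum cc_scale pf_chain[OF P]) auto
  then show ?thesis unfolding Suc by simp
qed

lemma thick0: "thick 0 Y = closure Y"
proof (cases "Y = {}")
  case True then show ?thesis by (simp add: thick_def)
next
  case False
  show ?thesis
  proof (rule set_eqI)
    fix x
    have "infdist x Y \<le> 0 \<longleftrightarrow> infdist x Y = 0" using infdist_nonneg[of x Y] by linarith
    then show "x \<in> thick 0 Y \<longleftrightarrow> x \<in> closure Y"
      unfolding thick_def using in_closure_iff_infdist_zero[OF False, of x] False by simp
  qed
qed

lemma thick_closed: "closed (thick R Y)"
proof (cases "Y = {}")
  case True then show ?thesis by (simp add: thick_def)
next
  case False
  then have "thick R Y = {x. infdist x Y \<le> R}" unfolding thick_def by simp
  also have "closed \<dots>"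
    by (intro closed_Collect_le continuous_on_infdist continuous_on_id continuous_on_const)
  finally show ?thesis .
qed

lemma supp_Int:
  assumes lf: "locfin_measure n \<mu>" and c: "closed Y1"
    and s1: "supported_on n Y1 \<mu>" and s2: "supported_on n Y2 \<mu>"
  shows "supported_on n (Y1 \<inter> Y2) \<mu>"
  unfolding supported_on_def
proof (intro ballI impI)
  fix A assume A: "A \<in> bsets n" "A \<inter> cube n (Y1 \<inter> Y2) = {}"
  have cs: "cube n Y1 \<in> sets (PM n)" by (rule cube_sets[OF c])
  have ci: "cube n (Y1 \<inter> Y2) = cube n Y1 \<inter> cube n Y2" unfolding cube_def by (rule PiE_Int[symmetric])
  have "\<mu> A = \<mu> (A \<inter> cube n Y1) + \<mu> (A - cube n Y1)" by (rule lf_split[OF lf A(1) cs])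
  moreover have "\<mu> (A \<inter> cube n Y1) = 0"
    using s2 bsets_Int[OF A(1) cs] A(2) ci unfolding supported_on_def by blast
  moreover have "\<mu> (A - cube n Y1) = 0"
    using s1 bsets_Diff[OF A(1) cs] unfolding supported_on_def by blast
  ultimately show "\<mu> A = 0" by simp
qed

lemma supp_add: "supported_on n Y \<mu> \<Longrightarrow> supported_on n Y \<nu> \<Longrightarrow> supported_on n Y (\<mu> + \<nu>)"
  unfolding supported_on_def by simp

lemma supp_scale: "supported_on n Y \<mu> \<Longrightarrow> supported_on n Y (\<lambda>A. c * \<mu> A)"
  unfolding supported_on_def by simp

definition ufam :: "'a set set \<Rightarrow> bool" where
  "ufam F \<longleftrightarrow> {} \<in> F \<and> (\<forall>Y\<in>F. \<forall>Y'\<in>F. Y \<union> Y' \<in> F) \<and> (\<forall>Y\<in>F. \<forall>Y'. Y' \<subseteq> Y \<longrightarrow> Y' \<in> F)"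

lemma big_ufam: "big_family F \<Longrightarrow> ufam F"
  unfolding big_family_def ufam_def by blast

lemma big_thick: "big_family F \<Longrightarrow> Y \<in> F \<Longrightarrow> thick R Y \<in> F"
  unfolding big_family_def by blast

lemma ufamD1: "ufam F \<Longrightarrow> {} \<in> F"
  unfolding ufam_def by (elim conjE)

lemma ufamD2: "ufam F \<Longrightarrow> Y \<in> F \<Longrightarrow> Y' \<in> F \<Longrightarrow> Y \<union> Y' \<in> F"
  unfolding ufam_def by (elim conjE) simp

lemma ufamD3: "ufam F \<Longrightarrow> Y \<in> F \<Longrightarrow> Y' \<subseteq> Y \<Longrightarrow> Y' \<in> F"
proof -
  assume "ufam F" "Y \<in> F" "Y' \<subseteq> Y"
  moreover have "\<forall>Y\<in>F. \<forall>Y'. Y' \<subseteq> Y \<longrightarrow> Y' \<in> F" using \<open>ufam F\<close> unfolding ufam_def by (elim conjE)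
  ultimately show "Y' \<in> F" by blast
qed

lemmas ufamD = ufamD1 ufamD2 ufamD3

lemma ufamI:
  assumes "{} \<in> F" "\<And>Y Y'. Y \<in> F \<Longrightarrow> Y' \<in> F \<Longrightarrow> Y \<union> Y' \<in> F" "\<And>Y Y'. Y \<in> F \<Longrightarrow> Y' \<subseteq> Y \<Longrightarrow> Y' \<in> F"
  shows "ufam F"
  unfolding ufam_def using assms by auto

lemma cap_iff:
  assumes "ufam X" "ufam Z"
  shows "Y \<in> fam_cap X Z \<longleftrightarrow> Y \<in> X \<and> Y \<in> Z"
proof
  assume "Y \<in> fam_cap X Z"
  then obtain X1 Z1 where "Y = X1 \<inter> Z1" "X1 \<in> X" "Z1 \<in> Z" unfolding fam_cap_def by blast
  then show "Y \<in> X \<and> Y \<in> Z" using ufamD(3)[OF assms(1)] ufamD(3)[OF assms(2)] by blast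
next
  assume "Y \<in> X \<and> Y \<in> Z"
  then show "Y \<in> fam_cap X Z" unfolding fam_cap_def by blast
qed

lemma ufam_cap: assumes "ufam X" "ufam Z" shows "ufam (fam_cap X Z)"
proof (rule ufamI)
  show "{} \<in> fam_cap X Z" using assms by (simp add: cap_iff ufamD1)
  show "Y \<union> Y' \<in> fam_cap X Z" if "Y \<in> fam_cap X Z" "Y' \<in> fam_cap X Z" for Y Y'
    using that assms by (simp add: cap_iff ufamD2)
  show "Y' \<in> fam_cap X Z" if "Y \<in> fam_cap X Z" "Y' \<subseteq> Y" for Y Y'
    using that assms ufamD3[of X Y Y'] ufamD3[of Z Y Y'] by (simp add: cap_iff)
qed

lemma cup_mem: "Y \<in> fam_cup X W \<longleftrightarrow> (\<exists>X1 W1. Y = X1 \<union> W1 \<and> X1 \<in> X \<and> W1 \<in> W)"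
  unfolding fam_cup_def by blast

lemma cupI: "A \<in> X \<Longrightarrow> B \<in> W \<Longrightarrow> A \<union> B \<in> fam_cup X W"
  unfolding fam_cup_def by blast

lemma capI: "A \<in> X \<Longrightarrow> B \<in> Z \<Longrightarrow> A \<inter> B \<in> fam_cap X Z"
  unfolding fam_cap_def by blast

lemma cupE: assumes "Y \<in> fam_cup X W" obtains A B where "Y = A \<union> B" "A \<in> X" "B \<in> W"
  using assms unfolding fam_cup_def by blast

lemma ufam_cup: assumes "ufam X" "ufam W" shows "ufam (fam_cup X W)"
proof (rule ufamI)
  show "{} \<in> fam_cup X W" using cupI[OF ufamD1[OF assms(1)] ufamD1[OF assms(2)]] by simp
next
  fix Y Y' assume "Y \<in> fam_cup X W" "Y' \<in> fam_cup X W"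
  then obtain X1 W1 X2 W2 where e: "Y = X1 \<union> W1" "X1 \<in> X" "W1 \<in> W" "Y' = X2 \<union> W2" "X2 \<in> X" "W2 \<in> W"
    by (metis cupE)
  have "Y \<union> Y' = (X1 \<union> X2) \<union> (W1 \<union> W2)" unfolding e(1,4) by (simp add: Un_ac)
  then show "Y \<union> Y' \<in> fam_cup X W"
    using cupI[OF ufamD2[OF assms(1) e(2,5)] ufamD2[OF assms(2) e(3,6)]] by simp
next
  fix Y Y' assume "Y \<in> fam_cup X W" "Y' \<subseteq> Y"
  then obtain X1 W1 where e: "Y = X1 \<union> W1" "X1 \<in> X" "W1 \<in> W" by (metis cupE)
  have "Y' = (Y' \<inter> X1) \<union> (Y' \<inter> W1)" using \<open>Y' \<subseteq> Y\<close> unfolding e(1) by blast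
  then show "Y' \<in> fam_cup X W"
    using cupI[OF ufamD3[OF assms(1) e(2), of "Y' \<inter> X1"] ufamD3[OF assms(2) e(3), of "Y' \<inter> W1"]] by simp
qed

lemma cup_left: "ufam W \<Longrightarrow> X \<subseteq> fam_cup X W"
proof
  fix Y assume "ufam W" "Y \<in> X"
  then show "Y \<in> fam_cup X W" using cupI[of Y X "{}" W] ufamD1[of W] by simp
qed

lemma cup_right: "ufam X \<Longrightarrow> W \<subseteq> fam_cup X W"
proof
  fix Y assume "ufam X" "Y \<in> W"
  then show "Y \<in> fam_cup X W" using cupI[of "{}" X Y W] ufamD1[of X] by simp
qed

lemma fam_lemma:
  assumes X: "ufam X" and Z: "ufam Z" and W: "ufam W" and h: "fam_cap X W \<subseteq> fam_cap X Z"
    and Y1: "Y1 \<in> X" and W2: "W2 \<in> W" and Ya: "Ya \<in> fam_cup (fam_cap X Z) W"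
  shows "Y1 \<inter> (W2 \<union> Ya) \<in> fam_cap X Z"
proof -
  obtain V W3 where V: "Ya = V \<union> W3" "V \<in> fam_cap X Z" "W3 \<in> W" using Ya by (rule cupE)
  have "Y1 \<inter> (W2 \<union> W3) \<in> fam_cap X W" using capI[OF Y1 ufamD2[OF W W2 V(3)]] .
  then have 1: "Y1 \<inter> (W2 \<union> W3) \<in> fam_cap X Z" using h by (rule subsetD[rotated])
  have 2: "V \<union> (Y1 \<inter> (W2 \<union> W3)) \<in> fam_cap X Z" using ufamD2[OF ufam_cap[OF X Z] V(2) 1] .
  have "Y1 \<inter> (W2 \<union> Ya) \<subseteq> V \<union> (Y1 \<inter> (W2 \<union> W3))" unfolding V(1) by blast
  then show ?thesis using ufamD3[OF ufam_cap[OF X Z] 2] by blast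
qed

lemma CX_I: "coarse_chain n \<mu> \<Longrightarrow> Y \<in> F \<Longrightarrow> supported_on n Y \<mu> \<Longrightarrow> \<mu> \<in> CX n F"
  unfolding CX_def by blast

lemma CX_E: assumes "\<mu> \<in> CX n F" obtains Y where "coarse_chain n \<mu>" "Y \<in> F" "supported_on n Y \<mu>"
  using assms unfolding CX_def by blast

lemma CX_zero: assumes F: "ufam F" shows "(\<lambda>A. 0) \<in> CX n F"
proof -
  have "supported_on n {} (\<lambda>A. 0::complex)" by (simp add: supported_on_def)
  then show ?thesis using CX_I[OF cc_zero ufamD1[OF F]] by blast
qed

lemma CX_add:
  assumes F: "ufam F" and m: "\<mu> \<in> CX n F" and v: "\<nu> \<in> CX n F"
  shows "\<mu> + \<nu> \<in> CX n F"
proof -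
  obtain Y1 where Y1: "coarse_chain n \<mu>" "Y1 \<in> F" "supported_on n Y1 \<mu>" using m by (rule CX_E)
  obtain Y2 where Y2: "coarse_chain n \<nu>" "Y2 \<in> F" "supported_on n Y2 \<nu>" using v by (rule CX_E)
  have "supported_on n (Y1 \<union> Y2) (\<mu> + \<nu>)"
    by (rule supp_add[OF supp_mono[OF Y1(3)] supp_mono[OF Y2(3)]]) auto
  then show ?thesis using CX_I[OF cc_add[OF Y1(1) Y2(1)] ufamD2[OF F Y1(2) Y2(2)]] by blast
qed

lemma CX_scale: assumes m: "\<mu> \<in> CX n F" shows "(\<lambda>A. c * \<mu> A) \<in> CX n F"
proof -
  obtain Y1 where Y1: "coarse_chain n \<mu>" "Y1 \<in> F" "supported_on n Y1 \<mu>" using m by (rule CX_E)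
  show ?thesis using CX_I[OF cc_scale[OF Y1(1)] Y1(2) supp_scale[OF Y1(3)]] .
qed

lemma CX_mono: assumes "F \<subseteq> G" shows "CX n F \<subseteq> CX n G"
proof
  fix \<mu> assume "\<mu> \<in> CX n F"
  then obtain Y where "coarse_chain n \<mu>" "Y \<in> F" "supported_on n Y \<mu>" by (rule CX_E)
  then show "\<mu> \<in> CX n G" using CX_I[of n \<mu> Y G] assms by blast
qed

lemma uminus_fun_scale: "- (\<mu> :: 'b \<Rightarrow> complex) = (\<lambda>A. (-1) * \<mu> A)"
  by (simp add: fun_eq_iff)

lemma CX_uminus: "\<mu> \<in> CX n F \<Longrightarrow> - \<mu> \<in> CX n F"
  unfolding uminus_fun_scale by (rule CX_scale)

lemma CX_diff: "ufam F \<Longrightarrow> \<mu> \<in> CX n F \<Longrightarrow> \<nu> \<in> CX n F \<Longrightarrow> \<mu> - \<nu> \<in> CX n F"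
  unfolding diff_conv_add_uminus by (rule CX_add[OF _ _ CX_uminus])

lemma CX_cc: "\<mu> \<in> CX n F \<Longrightarrow> coarse_chain n \<mu>"
  unfolding CX_def by blast

lemma bd_uminus:
  assumes P: "proper_metric_space TYPE('a::metric_space)" and m: "coarse_chain n (\<mu> :: (nat \<Rightarrow> 'a) set \<Rightarrow> complex)"
  shows "bd n (- \<mu>) = - bd n \<mu>"
  unfolding uminus_fun_scale by (rule bd_scale[OF P m])

lemma RB_I: "x = bd (Suc n) b + a \<Longrightarrow> b \<in> CX (Suc n) F1 \<Longrightarrow> a \<in> CX n F2 \<Longrightarrow> x \<in> rel_bdries n F1 F2"
  unfolding rel_bdries_def chain_add_eq by blast

lemma RB_E: assumes "x \<in> rel_bdries n F1 F2"
  obtains b a where "x = bd (Suc n) b + a" "b \<in> CX (Suc n) F1" "a \<in> CX n F2"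
  using assms unfolding rel_bdries_def chain_add_eq by blast

lemma RB_zero: assumes "ufam F1" "ufam F2" shows "0 \<in> rel_bdries n F1 F2"
proof (rule RB_I[OF _ CX_zero[OF assms(1)] CX_zero[OF assms(2)]])
  show "0 = bd (Suc n) (\<lambda>A. 0) + (\<lambda>A. 0)" by (simp only: bd_zero) (simp add: fun_eq_iff)
qed

lemma RB_add:
  assumes P: "proper_metric_space TYPE('a::metric_space)" and F: "ufam F1" "ufam F2"
    and x: "x \<in> rel_bdries n F1 (F2 :: 'a set set)" and y: "y \<in> rel_bdries n F1 F2"
  shows "x + y \<in> rel_bdries n F1 F2"
proof -
  obtain b1 a1 where b1: "x = bd (Suc n) b1 + a1" "b1 \<in> CX (Suc n) F1" "a1 \<in> CX n F2" using x by (rule RB_E)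
  obtain b2 a2 where b2: "y = bd (Suc n) b2 + a2" "b2 \<in> CX (Suc n) F1" "a2 \<in> CX n F2" using y by (rule RB_E)
  have e: "bd (Suc n) (b1 + b2) = bd (Suc n) b1 + bd (Suc n) b2" by (rule bd_add[OF P CX_cc[OF b1(2)] CX_cc[OF b2(2)]])
  have "x + y = bd (Suc n) (b1 + b2) + (a1 + a2)" unfolding e b1(1) b2(1) by (simp add: add_ac)
  then show ?thesis using RB_I CX_add[OF F(1) b1(2) b2(2)] CX_add[OF F(2) b1(3) b2(3)] by blast
qed

lemma RB_uminus:
  assumes P: "proper_metric_space TYPE('a::metric_space)"
    and x: "x \<in> rel_bdries n F1 (F2 :: 'a set set)"
  shows "- x \<in> rel_bdries n F1 F2"
proof -
  obtain b1 a1 where b1: "x = bd (Suc n) b1 + a1" "b1 \<in> CX (Suc n) F1" "a1 \<in> CX n F2" using x by (rule RB_E)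
  have e: "bd (Suc n) (- b1) = - bd (Suc n) b1" by (rule bd_uminus[OF P CX_cc[OF b1(2)]])
  have "- x = bd (Suc n) (- b1) + (- a1)" unfolding e b1(1) by simp
  then show ?thesis using RB_I CX_uminus[OF b1(2)] CX_uminus[OF b1(3)] by blast
qed

lemma RB_mono: assumes "F1 \<subseteq> G1" "F2 \<subseteq> G2" shows "rel_bdries n F1 F2 \<subseteq> rel_bdries n G1 G2"
proof
  fix x assume "x \<in> rel_bdries n F1 F2"
  then obtain b a where e: "x = bd (Suc n) b + a" "b \<in> CX (Suc n) F1" "a \<in> CX n F2" by (rule RB_E)
  show "x \<in> rel_bdries n G1 G2"
    by (rule RB_I[OF e(1)]) (use e(2,3) CX_mono[OF assms(1)] CX_mono[OF assms(2)] in blast)+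
qed

lemma lf_restrict:
  fixes \<mu> :: "(nat \<Rightarrow> 'a::metric_space) set \<Rightarrow> complex"
  assumes lf: "locfin_measure n \<mu>" and S: "S \<in> sets (PM n)"
  shows "locfin_measure n (\<lambda>A. if A \<in> bsets n then \<mu> (A \<inter> S) else 0)"
proof (rule lf_intro)
  fix A :: "(nat \<Rightarrow> 'a) set" assume "A \<notin> bsets n"
  then show "(if A \<in> bsets n then \<mu> (A \<inter> S) else 0) = 0" by simp
next
  fix F :: "nat \<Rightarrow> (nat \<Rightarrow> 'a) set"
  assume F: "range F \<subseteq> bsets n" "disjoint_family F" "\<Union> (range F) \<in> bsets n"
  define G where "G k = F k \<inter> S" for k
  have "range G \<subseteq> bsets n" using F(1) bsets_Int[OF _ S] unfolding G_def by blast
  moreover have "disjoint_family G" using F(2) unfolding G_def disjoint_family_on_def by blast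
  moreover have UG: "\<Union>(range G) = (\<Union>(range F)) \<inter> S" unfolding G_def by blast
  ultimately have "(\<lambda>k. \<mu> (G k)) sums \<mu> ((\<Union>(range F)) \<inter> S)"
    using lf_sums[OF lf] bsets_Int[OF F(3) S] by metis
  moreover have "F k \<in> bsets n" for k using F(1) by blast
  ultimately show "(\<lambda>k. if F k \<in> bsets n then \<mu> (F k \<inter> S) else 0) sums
      (if \<Union> (range F) \<in> bsets n then \<mu> (\<Union> (range F) \<inter> S) else 0)"
    using F(3) unfolding G_def by simp
next
  fix A :: "(nat \<Rightarrow> 'a) set" and e :: real assume A: "A \<in> bsets n" and e: "e > 0"
  obtain K U where KU: "compactin (prod_top n) K" "openin (prod_top n) U" "K \<subseteq> A" "A \<subseteq> U"
      "\<And>B. B \<in> bsets n \<Longrightarrow> B \<subseteq> U - K \<Longrightarrow> cmod (\<mu> B) < e"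
    using lf_reg[OF lf A e] by blast
  show "\<exists>K U. compactin (prod_top n) K \<and> openin (prod_top n) U \<and> K \<subseteq> A \<and> A \<subseteq> U \<and>
          (\<forall>B\<in>bsets n. B \<subseteq> U - K \<longrightarrow> cmod (if B \<in> bsets n then \<mu> (B \<inter> S) else 0) < e)"
  proof (intro exI conjI ballI impI)
    show "compactin (prod_top n) K" "openin (prod_top n) U" "K \<subseteq> A" "A \<subseteq> U" using KU(1-4) by auto
    fix B assume B: "B \<in> bsets n" "B \<subseteq> U - K"
    have "B \<inter> S \<subseteq> U - K" using B(2) by blast
    then show "cmod (if B \<in> bsets n then \<mu> (B \<inter> S) else 0) < e"
      using KU(5)[OF bsets_Int[OF B(1) S]] B(1) by simp
  qed
qed

lemma cc_diff: "coarse_chain n \<mu> \<Longrightarrow> coarse_chain n \<nu> \<Longrightarrow> coarse_chain n (\<mu> - \<nu>)"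
  unfolding diff_conv_add_uminus uminus_fun_scale by (rule cc_add[OF _ cc_scale])

lemma supp_diff: "supported_on n Y \<mu> \<Longrightarrow> supported_on n Y \<nu> \<Longrightarrow> supported_on n Y (\<mu> - \<nu>)"
  unfolding supported_on_def by simp

lemma cc_lf: "coarse_chain n \<mu> \<Longrightarrow> locfin_measure n \<mu>"
  unfolding coarse_chain_def by blast

lemma decomp:
  assumes P: "proper_metric_space TYPE('a::metric_space)"
    and bX: "big_family (X :: 'a set set)" and bW: "big_family W"
    and b: "b \<in> CX m (fam_cup X W)"
  obtains bx bw Xc where "Xc \<in> X" "closed Xc" "bx \<in> CX m X" "supported_on m Xc bx"
    "bw \<in> CX m W" "b = bx + bw"
proof -
  obtain Y where cc: "coarse_chain m b" and Y: "Y \<in> fam_cup X W" "supported_on m Y b" using b by (rule CX_E)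
  obtain X1 W1 where XW1: "Y = X1 \<union> W1" "X1 \<in> X" "W1 \<in> W" using Y(1) by (rule cupE)
  obtain R where sid: "supp_in_diag m R b" using cc unfolding coarse_chain_def by blast
  have lf: "locfin_measure m b" using cc by (rule cc_lf)
  define Xc where "Xc = thick 0 X1"
  define Wc where "Wc = thick 0 W1"
  have Xc: "Xc \<in> X" "closed Xc" "X1 \<subseteq> Xc" unfolding Xc_def
    using big_thick[OF bX XW1(2), of 0] thick_closed[of 0 X1] closure_subset[of X1] by (auto simp: thick0)
  have Wc: "Wc \<in> W" "closed Wc" "W1 \<subseteq> Wc" unfolding Wc_def
    using big_thick[OF bW XW1(3), of 0] thick_closed[of 0 W1] closure_subset[of W1] by (auto simp: thick0)
  define S where "S = cube m Xc"
  have Ss: "S \<in> sets (PM m)" unfolding S_def by (rule cube_sets[OF Xc(2)])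
  define bx where "bx = (\<lambda>A. if A \<in> bsets m then b (A \<inter> S) else 0)"
  have lfx: "locfin_measure m bx" unfolding bx_def by (rule lf_restrict[OF lf Ss])
  have sidx: "supp_in_diag m R bx" unfolding supp_in_diag_def
  proof (intro ballI impI)
    fix A :: "(nat \<Rightarrow> 'a) set" assume A: "A \<in> bsets m" "A \<inter> diag_thick m R = {}"
    then have "A \<inter> S \<inter> diag_thick m R = {}" by blast
    then have "b (A \<inter> S) = 0" using sid bsets_Int[OF A(1) Ss] unfolding supp_in_diag_def by blast
    then show "bx A = 0" unfolding bx_def by simp
  qed
  have ccx: "coarse_chain m bx" unfolding coarse_chain_def using lfx sidx by blast
  have suppx: "supported_on m Xc bx" unfolding supported_on_def
  proof (intro ballI impI)
    fix A :: "(nat \<Rightarrow> 'a) set" assume A: "A \<in> bsets m" "A \<inter> cube m Xc = {}"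
    then have "A \<inter> S = {}" unfolding S_def by blast
    then show "bx A = 0" unfolding bx_def using lf_empty[OF lf] by simp
  qed
  have bxX: "bx \<in> CX m X" by (rule CX_I[OF ccx Xc(1) suppx])
  define bw where "bw = b - bx"
  have ccw: "coarse_chain m bw" unfolding bw_def by (rule cc_diff[OF cc ccx])
  define T where "T = thick (2 * R) Wc"
  have TW: "T \<in> W" unfolding T_def by (rule big_thick[OF bW Wc(1)])
  have suppw: "supported_on m T bw" unfolding supported_on_def
  proof (intro ballI impI)
    fix A :: "(nat \<Rightarrow> 'a) set" assume A: "A \<in> bsets m" "A \<inter> cube m T = {}"
    have e1: "b A = b (A \<inter> S) + b (A - S)" by (rule lf_split[OF lf A(1) Ss])
    define A' where "A' = A - S"
    have A': "A' \<in> bsets m" unfolding A'_def by (rule bsets_Diff[OF A(1) Ss])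
    define C where "C = cube m (Xc \<union> Wc)"
    have Cs: "C \<in> sets (PM m)" unfolding C_def by (rule cube_sets) (use Xc(2) Wc(2) in blast)
    have e2: "b A' = b (A' \<inter> C) + b (A' - C)" by (rule lf_split[OF lf A' Cs])
    have YC: "cube m Y \<subseteq> C" unfolding C_def cube_def XW1(1) using Xc(3) Wc(3) by (intro PiE_mono) auto
    have z1: "b (A' - C) = 0"
    proof -
      have "(A' - C) \<inter> cube m Y = {}" using YC by blast
      then show ?thesis using Y(2) bsets_Diff[OF A' Cs] unfolding supported_on_def by blast
    qed
    have z2: "b (A' \<inter> C) = 0"
    proof -
      have "(A' \<inter> C) \<inter> diag_thick m R = {}"
      proof (rule ccontr)
        assume "(A' \<inter> C) \<inter> diag_thick m R \<noteq> {}"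
        then obtain x where x: "x \<in> A" "x \<notin> S" "x \<in> C" "x \<in> diag_thick m R" unfolding A'_def by blast
        obtain y where y: "\<And>k. k \<le> m \<Longrightarrow> dist (x k) y \<le> R" using x(4) unfolding diag_thick_def by blast
        have xC: "\<And>k. k \<le> m \<Longrightarrow> x k \<in> Xc \<union> Wc" "x \<in> extensional {..m}"
          using x(3) unfolding C_def cube_def by (auto simp: PiE_iff)
        obtain j where j: "j \<le> m" "x j \<notin> Xc" using x(2) xC(2) unfolding S_def cube_def by (auto simp: PiE_iff)
        have xj: "x j \<in> Wc" using xC(1)[OF j(1)] j(2) by blast
        have "x k \<in> T" if k: "k \<le> m" for k
        proof -
          have "dist (x k) (x j) \<le> 2 * R"
            using dist_triangle[of "x k" "x j" y] y[OF k] y[OF j(1)] by (simp add: dist_commute)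
          moreover have "infdist (x k) Wc \<le> dist (x k) (x j)" by (rule infdist_le[OF xj])
          ultimately show ?thesis unfolding T_def thick_def using xj by auto
        qed
        then have "x \<in> cube m T" using xC(2) unfolding cube_def by (auto simp: PiE_iff)
        then show False using A(2) x(1) by blast
      qed
      then show ?thesis using sid bsets_Int[OF A' Cs] unfolding supp_in_diag_def by blast
    qed
    have "bw A = b A - b (A \<inter> S)" unfolding bw_def bx_def using A(1) by simp
    also have "\<dots> = b A'" unfolding A'_def using e1 by simp
    also have "\<dots> = 0" using e2 z1 z2 by simp
    finally show "bw A = 0" .
  qed
  have bwW: "bw \<in> CX m W" by (rule CX_I[OF ccw TW suppw])
  have "b = bx + bw" unfolding bw_def by simp
  then show ?thesis using that Xc(1,2) bxX suppx bwW by blast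
qed

lemma coset_eq:
  fixes G :: "('b \<Rightarrow> complex) set"
  assumes z: "0 \<in> G" and ad: "\<And>x y. x \<in> G \<Longrightarrow> y \<in> G \<Longrightarrow> x + y \<in> G" and ng: "\<And>x. x \<in> G \<Longrightarrow> - x \<in> G"
  shows "{c + b | b. b \<in> G} = {c' + b | b. b \<in> G} \<longleftrightarrow> c - c' \<in> G"
proof
  assume eq: "{c + b | b. b \<in> G} = {c' + b | b. b \<in> G}"
  have "c \<in> {c + b | b. b \<in> G}" using z by (intro CollectI exI[of _ 0]) simp
  then obtain b where "c = c' + b" "b \<in> G" unfolding eq by blast
  then show "c - c' \<in> G" by simp
next
  assume d: "c - c' \<in> G"
  show "{c + b | b. b \<in> G} = {c' + b | b. b \<in> G}"
  proof (intro equalityI subsetI)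
    fix x assume "x \<in> {c + b | b. b \<in> G}"
    then obtain b where b: "x = c + b" "b \<in> G" by blast
    have "x = c' + ((c - c') + b)" using b(1) by simp
    moreover have "(c - c') + b \<in> G" using ad[OF d b(2)] .
    ultimately show "x \<in> {c' + b | b. b \<in> G}" by blast
  next
    fix x assume "x \<in> {c' + b | b. b \<in> G}"
    then obtain b where b: "x = c' + b" "b \<in> G" by blast
    have "x = c + (- (c - c') + b)" using b(1) by simp
    moreover have "- (c - c') + b \<in> G" using ad[OF ng[OF d] b(2)] .
    ultimately show "x \<in> {c + b | b. b \<in> G}" by blast
  qed
qed

lemma coset_incl:
  fixes G G' :: "('b \<Rightarrow> complex) set"
  assumes sub: "G \<subseteq> G'" and z: "0 \<in> G" and ad: "\<And>x y. x \<in> G' \<Longrightarrow> y \<in> G' \<Longrightarrow> x + y \<in> G'"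
  shows "{x + b | x b. x \<in> {c + b | b. b \<in> G} \<and> b \<in> G'} = {c + b | b. b \<in> G'}"
proof (intro equalityI subsetI)
  fix y assume "y \<in> {x + b | x b. x \<in> {c + b | b. b \<in> G} \<and> b \<in> G'}"
  then obtain b0 b where b: "y = (c + b0) + b" "b0 \<in> G" "b \<in> G'" by blast
  have "y = c + (b0 + b)" using b(1) by (simp add: add.assoc)
  moreover have "b0 + b \<in> G'" using ad sub b(2,3) by blast
  ultimately show "y \<in> {c + b | b. b \<in> G'}" by blast
next
  fix y assume "y \<in> {c + b | b. b \<in> G'}"
  then obtain b where b: "y = c + b" "b \<in> G'" by blast
  have "y = (c + 0) + b" using b(1) by simp
  moreover have "c + 0 \<in> {c + b | b. b \<in> G}" using z by blast
  ultimately show "y \<in> {x + b | x b. x \<in> {c + b | b. b \<in> G} \<and> b \<in> G'}" using b(2) by blast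
qed

theorem proposition3p5:
  fixes \<X> \<Z> \<W> :: "'a::metric_space set set" and n :: nat
  assumes "proper_metric_space TYPE('a)"
    and "big_family \<X>" and "big_family \<Z>" and "big_family \<W>"
    and "fam_cap \<X> \<W> \<subseteq> fam_cap \<X> \<Z>"
  shows "bij_betw (HX_incl n (fam_cup \<X> \<W>) (fam_cup (fam_cap \<X> \<Z>) \<W>))
           (HX n \<X> (fam_cap \<X> \<Z>))
           (HX n (fam_cup \<X> \<W>) (fam_cup (fam_cap \<X> \<Z>) \<W>))"
proof -
  note P = assms(1)
  note bX = assms(2) and bZ = assms(3) and bW = assms(4) and h = assms(5)
  have uX: "ufam \<X>" "ufam \<Z>" "ufam \<W>" using bX bZ bW big_ufam by blast+
  define XZ where "XZ = fam_cap \<X> \<Z>"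
  define XW where "XW = fam_cup \<X> \<W>"
  define XZW where "XZW = fam_cup XZ \<W>"
  have uXZ: "ufam XZ" unfolding XZ_def by (rule ufam_cap[OF uX(1,2)])
  have uXW: "ufam XW" unfolding XW_def by (rule ufam_cup[OF uX(1,3)])
  have uXZW: "ufam XZW" unfolding XZW_def by (rule ufam_cup[OF uXZ uX(3)])
  define B where "B = rel_bdries n \<X> XZ"
  define B' where "B' = rel_bdries n XW XZW"
  define Cy where "Cy = rel_cycles n \<X> XZ"
  define Cy' where "Cy' = rel_cycles n XW XZW"
  have XXW: "\<X> \<subseteq> XW" unfolding XW_def by (rule cup_left[OF uX(3)])
  have XZXZW: "XZ \<subseteq> XZW" unfolding XZW_def by (rule cup_left[OF uX(3)])
  have WXZW: "\<W> \<subseteq> XZW" unfolding XZW_def by (rule cup_right[OF uXZ])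
  have BB': "B \<subseteq> B'" unfolding B_def B'_def by (rule RB_mono[OF XXW XZXZW])
  have B0: "0 \<in> B" unfolding B_def by (rule RB_zero[OF uX(1) uXZ])
  have Badd: "\<And>x y. x \<in> B \<Longrightarrow> y \<in> B \<Longrightarrow> x + y \<in> B" unfolding B_def by (rule RB_add[OF P uX(1) uXZ])
  have Bneg: "\<And>x. x \<in> B \<Longrightarrow> - x \<in> B" unfolding B_def by (rule RB_uminus[OF P])
  have B'0: "0 \<in> B'" unfolding B'_def by (rule RB_zero[OF uXW uXZW])
  have B'add: "\<And>x y. x \<in> B' \<Longrightarrow> y \<in> B' \<Longrightarrow> x + y \<in> B'" unfolding B'_def by (rule RB_add[OF P uXW uXZW])
  have B'neg: "\<And>x. x \<in> B' \<Longrightarrow> - x \<in> B'" unfolding B'_def by (rule RB_uminus[OF P])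
  have HXe: "HX n \<X> XZ = (\<lambda>c. {c + b | b. b \<in> B}) ` Cy"
    unfolding HX_def B_def Cy_def chain_add_eq ..
  have HXe': "HX n XW XZW = (\<lambda>c. {c + b | b. b \<in> B'}) ` Cy'"
    unfolding HX_def B'_def Cy'_def chain_add_eq ..
  have incl: "HX_incl n XW XZW {c + b | b. b \<in> B} = {c + b | b. b \<in> B'}" for c
    unfolding HX_incl_def chain_add_eq B'_def[symmetric] by (rule coset_incl[OF BB' B0 B'add])
  have key_inj: "\<beta> \<in> B" if b1: "\<beta> \<in> CX n \<X>" and b2: "\<beta> \<in> B'" for \<beta>
  proof -
    obtain b a where ba: "\<beta> = bd (Suc n) b + a" "b \<in> CX (Suc n) XW" "a \<in> CX n XZW"
      using b2 unfolding B'_def by (rule RB_E)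
    obtain bx bw Xc where d: "Xc \<in> \<X>" "closed Xc" "bx \<in> CX (Suc n) \<X>" "supported_on (Suc n) Xc bx"
        "bw \<in> CX (Suc n) \<W>" "b = bx + bw"
      by (rule decomp[OF P bX bW ba(2)[unfolded XW_def]])
    have ccx: "coarse_chain (Suc n) bx" using CX_cc[OF d(3)] .
    have ccw: "coarse_chain (Suc n) bw" using CX_cc[OF d(5)] .
    define a1 where "a1 = \<beta> - bd (Suc n) bx"
    have e1: "\<beta> = bd (Suc n) bx + a1" unfolding a1_def by simp
    have bdb: "bd (Suc n) b = bd (Suc n) bx + bd (Suc n) bw" unfolding d(6) by (rule bd_add[OF P ccx ccw])
    have e2: "a1 = bd (Suc n) bw + a" unfolding a1_def ba(1) bdb by simp
    have cca1: "coarse_chain n a1" unfolding a1_def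
      using cc_diff[OF CX_cc[OF b1], of "bd (Suc n) bx"] bd_chain[OF P ccx] by simp
    obtain Y0 where Y0: "Y0 \<in> \<X>" "supported_on n Y0 \<beta>" using b1 by (rule CX_E)
    have sbx: "supported_on n Xc (bd (Suc n) bx)" using bd_supp[OF cc_lf[OF ccx] d(4)] by simp
    define Y1 where "Y1 = thick 0 (Y0 \<union> Xc)"
    have Y1: "Y1 \<in> \<X>" "closed Y1" "Y0 \<union> Xc \<subseteq> Y1" unfolding Y1_def
      using big_thick[OF bX ufamD2[OF uX(1) Y0(1) d(1)], of 0] thick_closed[of 0 "Y0 \<union> Xc"]
        closure_subset[of "Y0 \<union> Xc"] by (auto simp: thick0)
    have s1: "supported_on n Y1 a1" unfolding a1_def
      by (rule supp_diff; rule supp_mono) (use Y0(2) sbx Y1(3) in auto)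
    obtain W2 where W2: "W2 \<in> \<W>" "supported_on (Suc n) W2 bw" using d(5) by (rule CX_E)
    have sbw: "supported_on n W2 (bd (Suc n) bw)" using bd_supp[OF cc_lf[OF ccw] W2(2)] by simp
    obtain Ya where Ya: "Ya \<in> XZW" "supported_on n Ya a" using ba(3) by (rule CX_E)
    have s2: "supported_on n (W2 \<union> Ya) a1" unfolding e2
      by (rule supp_add; rule supp_mono) (use sbw Ya(2) in auto)
    have s3: "supported_on n (Y1 \<inter> (W2 \<union> Ya)) a1" by (rule supp_Int[OF cc_lf[OF cca1] Y1(2) s1 s2])
    have mem: "Y1 \<inter> (W2 \<union> Ya) \<in> XZ" unfolding XZ_def
      by (rule fam_lemma[OF uX h Y1(1) W2(1)]) (use Ya(1) in \<open>simp add: XZW_def XZ_def\<close>)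
    have "a1 \<in> CX n XZ" by (rule CX_I[OF cca1 mem s3])
    then show "\<beta> \<in> B" unfolding B_def by (rule RB_I[OF e1 d(3)])
  qed
  have key_surj: "\<exists>c\<in>Cy. c' - c \<in> B'" if c': "c' \<in> Cy'" for c'
  proof -
    have c'1: "c' \<in> CX n XW" and c'2: "n = 0 \<or> bd n c' \<in> CX (n - 1) XZW"
      using c' unfolding Cy'_def rel_cycles_def by auto
    obtain cx cw Xc where d: "Xc \<in> \<X>" "closed Xc" "cx \<in> CX n \<X>" "supported_on n Xc cx"
        "cw \<in> CX n \<W>" "c' = cx + cw"
      by (rule decomp[OF P bX bW c'1[unfolded XW_def]])
    have ccx: "coarse_chain n cx" using CX_cc[OF d(3)] .
    have ccw: "coarse_chain n cw" using CX_cc[OF d(5)] .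
    have cwB: "cw \<in> B'" unfolding B'_def
    proof (rule RB_I[OF _ CX_zero[OF uXW]])
      show "cw = bd (Suc n) (\<lambda>A. 0) + cw" by (simp only: bd_zero) (simp add: fun_eq_iff)
      show "cw \<in> CX n XZW" using CX_mono[OF WXZW] d(5) by blast
    qed
    have "cx \<in> Cy"
    proof (cases "n = 0")
      case True then show ?thesis using d(3) unfolding Cy_def rel_cycles_def by blast
    next
      case False
      then have bdc': "bd n c' \<in> CX (n - 1) XZW" using c'2 by blast
      have ccb: "coarse_chain (n - 1) (bd n cx)" by (rule bd_chain[OF P ccx])
      have sx: "supported_on (n - 1) Xc (bd n cx)" by (rule bd_supp[OF cc_lf[OF ccx] d(4)])
      have bdc: "bd n c' = bd n cx + bd n cw" unfolding d(6) by (rule bd_add[OF P ccx ccw])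
      have ebd: "bd n cx = bd n c' - bd n cw" using bdc by simp
      obtain Ya where Ya: "Ya \<in> XZW" "supported_on (n - 1) Ya (bd n c')" using bdc' by (rule CX_E)
      obtain W2 where W2: "W2 \<in> \<W>" "supported_on n W2 cw" using d(5) by (rule CX_E)
      have sw: "supported_on (n - 1) W2 (bd n cw)" by (rule bd_supp[OF cc_lf[OF ccw] W2(2)])
      have s2: "supported_on (n - 1) (W2 \<union> Ya) (bd n cx)" unfolding ebd
        by (rule supp_diff; rule supp_mono) (use sw Ya(2) in auto)
      have s3: "supported_on (n - 1) (Xc \<inter> (W2 \<union> Ya)) (bd n cx)"
        by (rule supp_Int[OF cc_lf[OF ccb] d(2) sx s2])
      have mem: "Xc \<inter> (W2 \<union> Ya) \<in> XZ" unfolding XZ_def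
        by (rule fam_lemma[OF uX h d(1) W2(1)]) (use Ya(1) in \<open>simp add: XZW_def XZ_def\<close>)
      have "bd n cx \<in> CX (n - 1) XZ" by (rule CX_I[OF ccb mem s3])
      then show ?thesis using d(3) unfolding Cy_def rel_cycles_def by blast
    qed
    moreover have "c' - cx = cw" using d(6) by simp
    ultimately show ?thesis using cwB by auto
  qed
  have CyCy': "Cy \<subseteq> Cy'"
  proof
    fix c assume "c \<in> Cy"
    then have c: "c \<in> CX n \<X>" "n = 0 \<or> bd n c \<in> CX (n - 1) XZ" unfolding Cy_def rel_cycles_def by auto
    have "c \<in> CX n XW" using CX_mono[OF XXW] c(1) by blast
    moreover have "n = 0 \<or> bd n c \<in> CX (n - 1) XZW" using CX_mono[OF XZXZW] c(2) by blast
    ultimately show "c \<in> Cy'" unfolding Cy'_def rel_cycles_def by blast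
  qed
  have ceqB: "{c + b | b. b \<in> B} = {c' + b | b. b \<in> B} \<longleftrightarrow> c - c' \<in> B" for c c'
    by (rule coset_eq[OF B0 Badd Bneg])
  have ceqB': "{c + b | b. b \<in> B'} = {c' + b | b. b \<in> B'} \<longleftrightarrow> c - c' \<in> B'" for c c'
    by (rule coset_eq[OF B'0 B'add B'neg])
  let ?f = "HX_incl n XW XZW"
  have inj: "inj_on ?f (HX n \<X> XZ)"
  proof (rule inj_onI)
    fix C1 C2 assume C1: "C1 \<in> HX n \<X> XZ" and C2: "C2 \<in> HX n \<X> XZ" and eq: "?f C1 = ?f C2"
    obtain c1 where c1: "c1 \<in> Cy" "C1 = {c1 + b | b. b \<in> B}" using C1 unfolding HXe by blast
    obtain c2 where c2: "c2 \<in> Cy" "C2 = {c2 + b | b. b \<in> B}" using C2 unfolding HXe by blast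
    have "{c1 + b | b. b \<in> B'} = {c2 + b | b. b \<in> B'}" using eq unfolding c1(2) c2(2) incl .
    then have d': "c1 - c2 \<in> B'" using ceqB' by blast
    have "c1 \<in> CX n \<X>" "c2 \<in> CX n \<X>" using c1(1) c2(1) unfolding Cy_def rel_cycles_def by auto
    then have "c1 - c2 \<in> CX n \<X>" by (rule CX_diff[OF uX(1)])
    then have "c1 - c2 \<in> B" using key_inj d' by blast
    then show "C1 = C2" unfolding c1(2) c2(2) using ceqB by blast
  qed
  have img: "?f ` HX n \<X> XZ = HX n XW XZW"
  proof (intro equalityI subsetI)
    fix D assume "D \<in> ?f ` HX n \<X> XZ"
    then obtain c where c: "c \<in> Cy" "D = ?f {c + b | b. b \<in> B}" unfolding HXe by blast
    have "D = {c + b | b. b \<in> B'}" using c(2) incl by simp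
    then show "D \<in> HX n XW XZW" unfolding HXe' using CyCy' c(1) by blast
  next
    fix D assume "D \<in> HX n XW XZW"
    then obtain c' where c': "c' \<in> Cy'" "D = {c' + b | b. b \<in> B'}" unfolding HXe' by blast
    obtain c where c: "c \<in> Cy" "c' - c \<in> B'" using key_surj[OF c'(1)] by blast
    have "D = {c + b | b. b \<in> B'}" unfolding c'(2) using ceqB' c(2) by blast
    also have "\<dots> = ?f {c + b | b. b \<in> B}" using incl by simp
    finally show "D \<in> ?f ` HX n \<X> XZ" unfolding HXe using c(1) by blast
  qed
  show ?thesis unfolding bij_betw_def XZ_def[symmetric] XW_def[symmetric] XZW_def[symmetric]
    using inj img by blast
qed

end
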